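(* Let $\beta\in(0,1)$ be fixed, observations noiseless, $\Psi=\Psi_M$ (Matérn with $\nu>d/2$), and let $f=Tv$ for some fixed $v\in L_2(\Omega)$ (with $f\neq0$). Let $\widehat{CI}_{n,\beta}$ be the confidence interval centered at $\hat f_n$ with $\hat\sigma^2=Y^TR^{-1}Y$, i.e. $|\widehat{CI}_{n,\beta}(x)|=2q\sqrt{Y^TR^{-1}Y(1-r(x)^TR^{-1}r(x))}$, $q=\Phi^{-1}(1-\beta/2)$. For any sampling scheme $\mathcal{X}$ satisfying the fill distance condition, there exists $N$ (depending on $\Psi,\Omega,f$ and the fill distance constants) such that for all $n\ge N$, $$\big\|(f-\hat f_n)/|\widehat{CI}_{n,\beta}|\big\|_{L_\infty(\Omega)}\le C,$$ where $C>0$ depends only on $f,\Psi,\Omega,\beta$.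
   Context: $\Omega\subset\mathbb{R}^d$ is convex and compact with positive Lebesgue measure. Matérn: $\Psi_M(h)=\frac{1}{\Gamma(\nu-d/2)2^{\nu-d/2-1}}\|h\|_2^{\nu-d/2}K_{\nu-d/2}(\|h\|_2)$. $T:L_2(\Omega)\to L_2(\Omega)$, $Tv(x)=\int_\Omega\Psi(x-y)v(y)dy$. Sampling scheme: sequence $\{X_n\}$ of sets of $n$ distinct points of $\Omega$; fill distance condition: $\sup_{x\in\Omega}\min_{x_j\in X}\|x-x_j\|_2\asymp n^{-1/d}$. For $X=\{x_1,\dots,x_n\}$: $Y=(f(x_k))_k$, $r(x)=(\Psi(x-x_k))_k$, $R=(\Psi(x_j-x_k))_{jk}$, $\hat f_n(x)=r(x)^TR^{-1}Y$. Convention $0/0=0$. *)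

theory Defs
  imports "HOL-Analysis.Analysis" "HOL-Probability.Distributions"
    "Jordan_Normal_Form.Gauss_Jordan_Elimination"
begin

definition besselK :: "real \<Rightarrow> real \<Rightarrow> real" where
  "besselK a r = (LBINT t:{0..}. exp (- r * cosh t) * cosh (a * t))"

text \<open>Matern kernel with smoothness nu in dimension d; at h = 0 it takes its limiting value 1.\<close>
definition matern :: "real \<Rightarrow> nat \<Rightarrow> ('a::real_normed_vector) \<Rightarrow> real" where
  "matern \<nu> d h = (let a = \<nu> - real d / 2 in
     if h = 0 then 1
     else 1 / (Gamma a * 2 powr (a - 1)) * norm h powr a * besselK a (norm h))"

definition kernel_op :: "('a::euclidean_space \<Rightarrow> real) \<Rightarrow> 'a set \<Rightarrow> ('a \<Rightarrow> real) \<Rightarrow> 'a \<Rightarrow> real" where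
  "kernel_op \<Psi> \<Omega> v x = (LINT y|lebesgue_on \<Omega>. \<Psi> (x - y) * v y)"

definition kmat :: "('a::real_normed_vector \<Rightarrow> real) \<Rightarrow> 'a list \<Rightarrow> real mat" where
  "kmat \<Psi> xs = mat (length xs) (length xs) (\<lambda>(j,k). \<Psi> (xs ! j - xs ! k))"

definition kvec :: "('a::real_normed_vector \<Rightarrow> real) \<Rightarrow> 'a list \<Rightarrow> 'a \<Rightarrow> real vec" where
  "kvec \<Psi> xs x = vec (length xs) (\<lambda>k. \<Psi> (x - xs ! k))"

definition obsvec :: "('a \<Rightarrow> real) \<Rightarrow> 'a list \<Rightarrow> real vec" where
  "obsvec f xs = vec (length xs) (\<lambda>k. f (xs ! k))"

definition kinv :: "('a::real_normed_vector \<Rightarrow> real) \<Rightarrow> 'a list \<Rightarrow> real mat" where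
  "kinv \<Psi> xs = the (mat_inverse (kmat \<Psi> xs))"

definition kriging :: "('a::real_normed_vector \<Rightarrow> real) \<Rightarrow> 'a list \<Rightarrow> ('a \<Rightarrow> real) \<Rightarrow> 'a \<Rightarrow> real" where
  "kriging \<Psi> xs f x = scalar_prod (kvec \<Psi> xs x) (kinv \<Psi> xs *\<^sub>v obsvec f xs)"

definition std_normal_cdf :: "real \<Rightarrow> real" where
  "std_normal_cdf x = (LBINT t:{..x}. std_normal_density t)"

definition std_normal_quantile :: "real \<Rightarrow> real" where
  "std_normal_quantile p = (THE q. std_normal_cdf q = p)"

definition ci_length :: "real \<Rightarrow> ('a::real_normed_vector \<Rightarrow> real) \<Rightarrow> 'a list \<Rightarrow> ('a \<Rightarrow> real) \<Rightarrow> 'a \<Rightarrow> real" where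
  "ci_length \<beta> \<Psi> xs f x =
     2 * std_normal_quantile (1 - \<beta> / 2) *
     sqrt (scalar_prod (obsvec f xs) (kinv \<Psi> xs *\<^sub>v obsvec f xs) *
           (1 - scalar_prod (kvec \<Psi> xs x) (kinv \<Psi> xs *\<^sub>v kvec \<Psi> xs x)))"

definition fill_distance :: "'a::metric_space set \<Rightarrow> 'a list \<Rightarrow> real" where
  "fill_distance \<Omega> xs = (SUP x\<in>\<Omega>. infdist x (set xs))"

definition sampling_scheme :: "'a::metric_space set \<Rightarrow> (nat \<Rightarrow> 'a list) \<Rightarrow> bool" where
  "sampling_scheme \<Omega> X = (\<forall>n. distinct (X n) \<and> length (X n) = n \<and> set (X n) \<subseteq> \<Omega>)"

definition fill_distance_condition :: "nat \<Rightarrow> 'a::metric_space set \<Rightarrow> (nat \<Rightarrow> 'a list) \<Rightarrow> bool" where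
  "fill_distance_condition d \<Omega> X = (\<exists>c1 c2. 0 < c1 \<and> 0 < c2 \<and>
     (\<forall>n\<ge>1. c1 * real n powr (- 1 / real d) \<le> fill_distance \<Omega> (X n) \<and>
             fill_distance \<Omega> (X n) \<le> c2 * real n powr (- 1 / real d)))"

end

theory Submission
  imports Defs "Jordan_Normal_Form.Determinant"
begin



lemma quad_disc:
  fixes A b C :: real
  assumes h: "\<And>t. 0 \<le> A + 2*t*b + t^2*C"
  shows "b^2 \<le> A*C" "0 \<le> A" "0 \<le> C"
proof -
  show A0: "0 \<le> A" using h[of 0] by simp
  show C0: "0 \<le> C"
  proof (rule ccontr)
    assume "\<not> 0 \<le> C"
    hence Cn: "C < 0" by simp
    define u0 where "u0 = sqrt ((A+1)/(-C))"
    have s2: "u0^2 = (A+1)/(-C)" unfolding u0_def using A0 Cn by (simp add: divide_nonneg_neg)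
    have h1: "0 \<le> A + 2*u0*b + u0^2*C" by (rule h)
    have h2: "0 \<le> A + 2*(-u0)*b + (-u0)^2*C" by (rule h)
    from h1 h2 have "0 \<le> A + u0^2*C" by simp
    also have "u0^2*C = -(A+1)" using s2 Cn by (simp add: field_simps)
    finally show False by simp
  qed
  show "b^2 \<le> A*C"
  proof (cases "C = 0")
    case True
    have "b = 0"
    proof (rule ccontr)
      assume "b \<noteq> 0"
      have "0 \<le> A + 2*(-(A+1)/(2*b))*b" using h[of "-(A+1)/(2*b)"] True by simp
      also have "\<dots> = -1" using \<open>b \<noteq> 0\<close> by (simp add: field_simps)
      finally show False by simp
    qed
    thus ?thesis using True by simp
  next
    case False
    hence Cp: "C > 0" using C0 by simp
    have "0 \<le> A + 2*(-b/C)*b + (-b/C)^2*C" by (rule h)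
    also have "\<dots> = A - b^2/C" using Cp by (simp add: field_simps power2_eq_square)
    finally have "b^2/C \<le> A" by simp
    thus ?thesis using Cp by (simp add: field_simps)
  qed
qed

lemma sum_delta_mult: "(j::nat) < n \<Longrightarrow> (\<Sum>l<n. (if j = l then 1 else 0) * (g l::real)) = g j"
proof -
  assume "j < n"
  have "(\<Sum>l<n. (if j = l then 1 else 0) * g l) = (\<Sum>l<n. if j = l then g l else 0)"
    by (rule sum.cong) auto
  thus ?thesis using \<open>j < n\<close> by simp
qed

lemma sum_delta_mult': "(j::nat) < n \<Longrightarrow> (\<Sum>l<n. (g l::real) * (if l = j then 1 else 0)) = g j"
  using sum_delta_mult[of j n g] by (simp add: mult.commute eq_commute)

locale kalg =
  fixes n :: nat and R B :: "nat \<Rightarrow> nat \<Rightarrow> real"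
  assumes symR: "\<And>j k. R j k = R k j"
    and RB: "\<And>j k. j < n \<Longrightarrow> k < n \<Longrightarrow> (\<Sum>l<n. R j l * B l k) = (if j = k then 1 else 0)"
    and BR: "\<And>j k. j < n \<Longrightarrow> k < n \<Longrightarrow> (\<Sum>l<n. B j l * R l k) = (if j = k then 1 else 0)"
    and psd: "\<And>c. 0 \<le> (\<Sum>j<n. \<Sum>k<n. c j * c k * R j k)"
begin

definition bil :: "(nat \<Rightarrow> real) \<Rightarrow> (nat \<Rightarrow> real) \<Rightarrow> real" where
  "bil g h = (\<Sum>j<n. \<Sum>k<n. g j * B j k * h k)"
definition Bv :: "(nat \<Rightarrow> real) \<Rightarrow> nat \<Rightarrow> real" where
  "Bv g j = (\<Sum>k<n. B j k * g k)"
definition q :: "(nat \<Rightarrow> real) \<Rightarrow> real" where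
  "q c = (\<Sum>j<n. \<Sum>k<n. c j * c k * R j k)"

lemma symB: assumes "j < n" "k < n" shows "B j k = B k j"
proof -
  have "B j k = (\<Sum>l<n. B j l * (if l = k then 1 else 0))"
    using sum_delta_mult'[OF assms(2), of "B j"] by simp
  also have "\<dots> = (\<Sum>l<n. B j l * (\<Sum>m<n. B k m * R m l))"
    by (intro sum.cong refl) (simp add: BR assms eq_commute)
  also have "\<dots> = (\<Sum>m<n. (\<Sum>l<n. B j l * R l m) * B k m)"
    apply (simp only: sum_distrib_left sum_distrib_right)
    apply (subst sum.swap)
    apply (intro sum.cong refl)
    apply (simp add: symR mult_ac)
    done
  also have "\<dots> = (\<Sum>m<n. (if j = m then 1 else 0) * B k m)"
    by (intro sum.cong refl) (simp add: BR assms)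
  also have "\<dots> = B k j" using sum_delta_mult[OF assms(1), of "B k"] by simp
  finally show ?thesis .
qed

lemma RBv: assumes "j < n" shows "(\<Sum>k<n. R j k * Bv g k) = g j"
proof -
  have "(\<Sum>k<n. R j k * Bv g k) = (\<Sum>l<n. (\<Sum>k<n. R j k * B k l) * g l)"
    unfolding Bv_def
    apply (simp only: sum_distrib_left sum_distrib_right)
    apply (subst sum.swap)
    apply (intro sum.cong refl)
    apply (simp add: mult_ac)
    done
  also have "\<dots> = (\<Sum>l<n. (if j = l then 1 else 0) * g l)"
    by (intro sum.cong refl) (simp add: RB assms)
  also have "\<dots> = g j" using sum_delta_mult[OF assms, of g] by simp
  finally show ?thesis .
qed

lemma q_expand: "q c = (\<Sum>j<n. c j * (\<Sum>k<n. R j k * c k))"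
  unfolding q_def by (simp add: sum_distrib_left algebra_simps)

lemma q_Bv: "q (Bv g) = bil g g"
proof -
  have "q (Bv g) = (\<Sum>j<n. Bv g j * g j)"
    unfolding q_expand by (intro sum.cong refl) (simp add: RBv)
  also have "\<dots> = bil g g" unfolding Bv_def bil_def
    by (simp add: sum_distrib_left sum_distrib_right algebra_simps)
  finally show ?thesis .
qed

lemma bil_nonneg: "0 \<le> bil g g"
  using psd[of "Bv g"] q_Bv unfolding q_def by simp

lemma bil_sym: "bil g h = bil h g"
proof -
  have "bil g h = (\<Sum>k<n. \<Sum>j<n. h k * B k j * g j)"
    unfolding bil_def
    by (subst sum.swap) (intro sum.cong refl, simp add: symB algebra_simps)
  thus ?thesis by (simp add: bil_def)
qed

lemma bil_add1: "bil (\<lambda>j. a * g j + b * h j) w = a * bil g w + b * bil h w"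
  unfolding bil_def by (simp add: algebra_simps sum.distrib sum_distrib_left)

lemma bil_add2: "bil w (\<lambda>j. a * g j + b * h j) = a * bil w g + b * bil w h"
  unfolding bil_def by (simp add: algebra_simps sum.distrib sum_distrib_left)

lemma bil_CS: "(bil g h)^2 \<le> bil g g * bil h h"
proof -
  have "\<And>t. 0 \<le> bil g g + 2*t*bil g h + t^2*bil h h"
  proof -
    fix t
    have "0 \<le> bil (\<lambda>j. 1 * g j + t * h j) (\<lambda>j. 1 * g j + t * h j)" by (rule bil_nonneg)
    also have "\<dots> = bil g g + 2*t*bil g h + t^2*bil h h"
      apply (simp only: bil_add1 bil_add2)
      apply (simp add: bil_sym[of h g] algebra_simps power2_eq_square)
      done
    finally show "0 \<le> bil g g + 2*t*bil g h + t^2*bil h h" .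
  qed
  from quad_disc(1)[OF this] show ?thesis .
qed

lemma q_CS: "(\<Sum>j<n. c j * g j)^2 \<le> q c * bil g g"
proof -
  have "\<And>t. 0 \<le> q c + 2*t*(-(\<Sum>j<n. c j * g j)) + t^2*bil g g"
  proof -
    fix t
    let ?u = "Bv g"
    have "0 \<le> q (\<lambda>j. c j - t * ?u j)" using psd[of "\<lambda>j. c j - t * ?u j"] unfolding q_def by simp
    also have "q (\<lambda>j. c j - t * ?u j) = q c - 2*t*(\<Sum>j<n. c j * (\<Sum>k<n. R j k * ?u k)) + t^2 * q ?u"
      unfolding q_def
      apply (simp add: algebra_simps sum.distrib sum_subtractf sum_distrib_left power2_eq_square)
      apply (subst (2) sum.swap)
      apply (simp add: symR algebra_simps sum.distrib)
      apply (simp add: sum_distrib_left mult_ac)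
      done
    also have "(\<Sum>j<n. c j * (\<Sum>k<n. R j k * ?u k)) = (\<Sum>j<n. c j * g j)"
      by (intro sum.cong refl) (simp add: RBv)
    finally show "0 \<le> q c + 2*t*(-(\<Sum>j<n. c j * g j)) + t^2*bil g g" by (simp add: q_Bv)
  qed
  from quad_disc(1)[OF this] show ?thesis by simp
qed

end



lemma sp_bil:
  fixes B :: "real mat" assumes B: "B \<in> carrier_mat n n"
  shows "scalar_prod (vec n g) (B *\<^sub>v vec n h) = (\<Sum>j<n. \<Sum>k<n. g j * B $$ (j,k) * h k)"
proof -
  have "scalar_prod (vec n g) (B *\<^sub>v vec n h) = (\<Sum>j<n. g j * (\<Sum>k<n. B $$ (j,k) * h k))"
    using B by (simp add: scalar_prod_def atLeast0LessThan)
  also have "\<dots> = (\<Sum>j<n. \<Sum>k<n. g j * B $$ (j,k) * h k)"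
    by (simp add: sum_distrib_left mult_ac)
  finally show ?thesis .
qed

lemma kmat_kalg:
  fixes \<Psi> :: "'a::real_normed_vector \<Rightarrow> real" and xs :: "'a list"
  assumes pd: "\<And>c. (\<exists>j<length xs. c j \<noteq> 0) \<Longrightarrow> 0 < (\<Sum>j<length xs. \<Sum>k<length xs. c j * c k * \<Psi> (xs!j - xs!k))"
    and psd: "\<And>c. 0 \<le> (\<Sum>j<length xs. \<Sum>k<length xs. c j * c k * \<Psi> (xs!j - xs!k))"
    and sym: "\<And>h. \<Psi> (-h) = \<Psi> h"
  shows "kalg (length xs) (\<lambda>j k. \<Psi> (xs!j - xs!k)) (\<lambda>j k. kinv \<Psi> xs $$ (j,k))"
    and "kinv \<Psi> xs \<in> carrier_mat (length xs) (length xs)"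
proof -
  define n where "n = length xs"
  define R where "R = kmat \<Psi> xs"
  have Rc: "R \<in> carrier_mat n n" by (simp add: R_def kmat_def n_def)
  have Rij: "i < n \<Longrightarrow> j < n \<Longrightarrow> R $$ (i,j) = \<Psi> (xs!i - xs!j)" for i j
    by (simp add: R_def kmat_def n_def)
  have "mat_inverse R \<noteq> None"
  proof
    assume "mat_inverse R = None"
    hence U: "R \<notin> Units (ring_mat TYPE(real) n ())" by (rule mat_inverse(1)[OF Rc])
    have "Determinant.det R = 0"
    proof (rule ccontr)
      assume "Determinant.det R \<noteq> 0"
      from det_non_zero_imp_unit[OF Rc this, of "()"] U show False by simp
    qed
    then obtain w where w: "w \<in> carrier_vec n" "w \<noteq> 0\<^sub>v n" "R *\<^sub>v w = 0\<^sub>v n"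
      using det_0_iff_vec_prod_zero[OF Rc] by blast
    define c where "c j = w $ j" for j
    have "\<exists>j<n. c j \<noteq> 0"
    proof (rule ccontr)
      assume "\<not> (\<exists>j<n. c j \<noteq> 0)"
      hence "w = 0\<^sub>v n" using w(1) by (intro eq_vecI) (auto simp: c_def)
      thus False using w(2) by simp
    qed
    hence pos: "0 < (\<Sum>j<n. \<Sum>k<n. c j * c k * \<Psi> (xs!j - xs!k))" using pd by (simp add: n_def)
    have Rw: "(R *\<^sub>v w) $ j = (\<Sum>k<n. \<Psi> (xs!j - xs!k) * w $ k)" if "j < n" for j
    proof -
      have "(R *\<^sub>v w) $ j = (\<Sum>x<n. Matrix.row R j $ x * w $ x)"
        using Rc w(1) that by (simp add: scalar_prod_def atLeast0LessThan)
      also have "\<dots> = (\<Sum>k<n. \<Psi> (xs!j - xs!k) * w $ k)"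
        using Rc that by (intro sum.cong refl) (simp add: Rij)
      finally show ?thesis .
    qed
    have "(\<Sum>j<n. \<Sum>k<n. c j * c k * \<Psi> (xs!j - xs!k)) = (\<Sum>j<n. c j * (R *\<^sub>v w) $ j)"
      by (intro sum.cong refl) (simp add: Rw sum_distrib_left c_def mult_ac)
    also have "\<dots> = 0" using w(3) by simp
    finally show False using pos by simp
  qed
  then obtain B where B: "mat_inverse R = Some B" by auto
  from mat_inverse(2)[OF Rc B] have RB: "R * B = 1\<^sub>m n" and BR: "B * R = 1\<^sub>m n" and Bc: "B \<in> carrier_mat n n"
    by auto
  have kinv: "kinv \<Psi> xs = B" using B by (simp add: kinv_def R_def)
  show "kinv \<Psi> xs \<in> carrier_mat (length xs) (length xs)" using Bc kinv by (simp add: n_def)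
  show "kalg (length xs) (\<lambda>j k. \<Psi> (xs!j - xs!k)) (\<lambda>j k. kinv \<Psi> xs $$ (j,k))"
  proof (unfold_locales, unfold kinv n_def[symmetric])
    show "\<Psi> (xs ! j - xs ! k) = \<Psi> (xs ! k - xs ! j)" for j k
      using sym[of "xs ! k - xs ! j"] by simp
    show "(\<Sum>l<n. \<Psi> (xs ! j - xs ! l) * B $$ (l, k)) = (if j = k then 1 else 0)" if "j < n" "k < n" for j k
    proof -
      have "(R * B) $$ (j,k) = (\<Sum>x<n. Matrix.row R j $ x * col B k $ x)"
        using that Rc Bc by (simp add: scalar_prod_def atLeast0LessThan)
      also have "\<dots> = (\<Sum>l<n. \<Psi> (xs ! j - xs ! l) * B $$ (l, k))"
        using that Rc Bc by (intro sum.cong refl) (simp add: Rij)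
      finally have "(R * B) $$ (j,k) = (\<Sum>l<n. \<Psi> (xs ! j - xs ! l) * B $$ (l, k))" .
      thus ?thesis using RB that by simp
    qed
    show "(\<Sum>l<n. B $$ (j, l) * \<Psi> (xs ! l - xs ! k)) = (if j = k then 1 else 0)" if "j < n" "k < n" for j k
    proof -
      have "(B * R) $$ (j,k) = (\<Sum>x<n. Matrix.row B j $ x * col R k $ x)"
        using that Rc Bc by (simp add: scalar_prod_def atLeast0LessThan)
      also have "\<dots> = (\<Sum>l<n. B $$ (j, l) * \<Psi> (xs ! l - xs ! k))"
        using that Rc Bc by (intro sum.cong refl) (simp add: Rij)
      finally have "(B * R) $$ (j,k) = (\<Sum>l<n. B $$ (j, l) * \<Psi> (xs ! l - xs ! k))" .
      thus ?thesis using BR that by simp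
    qed
    show "0 \<le> (\<Sum>j<n. \<Sum>k<n. c j * c k * \<Psi> (xs ! j - xs ! k))" for c
      using psd by (simp add: n_def)
  qed
qed

context kalg begin

lemma Bv_dot: "(\<Sum>j<n. Bv g j * h j) = bil h g"
proof -
  have "(\<Sum>j<n. Bv g j * h j) = (\<Sum>j<n. \<Sum>k<n. h j * B j k * g k)"
    unfolding Bv_def by (simp add: sum_distrib_right sum_distrib_left mult_ac)
  thus ?thesis by (simp add: bil_def)
qed

lemma resid_psd:
  fixes rx ry :: "nat \<Rightarrow> real" and kxy :: real
  assumes ext: "\<And>u \<alpha> \<beta>. 0 \<le> q u - 2*\<alpha>*(\<Sum>j<n. u j * rx j) - 2*\<beta>*(\<Sum>j<n. u j * ry j) + \<alpha>^2 + 2*\<alpha>*\<beta>*kxy + \<beta>^2"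
  shows "0 \<le> \<alpha>^2*(1 - bil rx rx) + 2*\<alpha>*\<beta>*(kxy - bil rx ry) + \<beta>^2*(1 - bil ry ry)"
proof -
  define g where "g j = \<alpha> * rx j + \<beta> * ry j" for j
  have h: "0 \<le> q (Bv g) - 2*\<alpha>*(\<Sum>j<n. Bv g j * rx j) - 2*\<beta>*(\<Sum>j<n. Bv g j * ry j) + \<alpha>^2 + 2*\<alpha>*\<beta>*kxy + \<beta>^2"
    by (rule ext)
  have e1: "q (Bv g) = \<alpha> * bil rx g + \<beta> * bil ry g"
    unfolding q_Bv g_def by (rule bil_add1)
  have e2: "bil rx g = \<alpha> * bil rx rx + \<beta> * bil rx ry" unfolding g_def by (rule bil_add2)
  have e3: "bil ry g = \<alpha> * bil ry rx + \<beta> * bil ry ry" unfolding g_def by (rule bil_add2)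
  have e4: "bil ry rx = bil rx ry" by (rule bil_sym)
  from h show ?thesis
    unfolding Bv_dot e1 e2 e3 e4 by (simp add: algebra_simps power2_eq_square)
qed

lemma resid_bounds:
  fixes rx ry :: "nat \<Rightarrow> real" and kxy :: real
  assumes ext: "\<And>u \<alpha> \<beta>. 0 \<le> q u - 2*\<alpha>*(\<Sum>j<n. u j * rx j) - 2*\<beta>*(\<Sum>j<n. u j * ry j) + \<alpha>^2 + 2*\<alpha>*\<beta>*kxy + \<beta>^2"
  shows "(kxy - bil rx ry)^2 \<le> (1 - bil rx rx) * (1 - bil ry ry)"
    and "0 \<le> 1 - bil rx rx" and "0 \<le> 1 - bil ry ry"
proof -
  have "\<And>t. 0 \<le> (1 - bil rx rx) + 2*t*(kxy - bil rx ry) + t^2*(1 - bil ry ry)"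
    using resid_psd[OF ext, of 1] by simp
  from quad_disc[OF this] show "(kxy - bil rx ry)^2 \<le> (1 - bil rx rx) * (1 - bil ry ry)"
    and "0 \<le> 1 - bil rx rx" and "0 \<le> 1 - bil ry ry" by auto
qed

lemma q_delta: assumes k: "k < n" shows "q (\<lambda>j. if j = k then 1 else 0) = R k k"
proof -
  let ?e = "\<lambda>j::nat. if j = k then 1 else (0::real)"
  have "q ?e = (\<Sum>j<n. ?e j * (\<Sum>l<n. R j l * ?e l))"
    by (simp add: q_def sum_distrib_left mult_ac)
  also have "\<dots> = (\<Sum>j<n. ?e j * R j k)"
    using sum_delta_mult'[OF k] by simp
  also have "\<dots> = R k k"
    using sum_delta_mult'[OF k, of "\<lambda>j. R j k"] by (simp add: mult.commute)
  finally show ?thesis .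
qed

lemma coord_le_bil:
  assumes "k < n" and Rkk: "R k k = 1" shows "(g k)^2 \<le> bil g g"
proof -
  have "(\<Sum>j<n. (if j = k then 1 else 0) * g j)^2 \<le> q (\<lambda>j. if j = k then 1 else 0) * bil g g"
    by (rule q_CS)
  moreover have "(\<Sum>j<n. (if j = k then 1 else 0) * g j) = g k"
    using sum_delta_mult[OF assms(1), of g] by (simp add: eq_commute)
  ultimately show ?thesis using q_delta[OF assms(1)] Rkk by simp
qed

end

no_notation Matrix.scalar_prod (infix \<open>\<bullet>\<close> 70)
no_notation Matrix.vec_index (infixl \<open>$\<close> 100)



definition mono_v :: "'d list \<Rightarrow> real^'d \<Rightarrow> real" where
  "mono_v L y = prod_list (map (\<lambda>i. y $ i) L)"

lemma inner_vec_sum: "(x::real^'d) \<bullet> y = (\<Sum>i\<in>UNIV. x $ i * y $ i)"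
  by (simp add: inner_vec_def)

lemma inner_power_PiE:
  "((x::real^'d) \<bullet> y) ^ m = (\<Sum>f\<in>Pi\<^sub>E {..<m} (\<lambda>_. UNIV). (\<Prod>l<m. x $ f l) * (\<Prod>l<m. y $ f l))"
proof -
  have "(x \<bullet> y) ^ m = (\<Prod>l<m. \<Sum>i\<in>UNIV. x $ i * y $ i)" by (simp add: inner_vec_sum)
  also have "\<dots> = (\<Sum>f\<in>Pi\<^sub>E {..<m} (\<lambda>_. UNIV). \<Prod>l<m. x $ f l * y $ f l)"
    by (rule prod_sum_PiE) auto
  also have "\<dots> = (\<Sum>f\<in>Pi\<^sub>E {..<m} (\<lambda>_. UNIV). (\<Prod>l<m. x $ f l) * (\<Prod>l<m. y $ f l))"
    by (simp add: prod.distrib)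
  finally show ?thesis .
qed

lemma prod_list_map_nth: "prod_list (map f xs) = (\<Prod>i<length xs. f (xs!i))"
proof (induction xs)
  case Nil
  then show ?case by simp
next
  case (Cons a xs)
  have "(\<Prod>i<Suc (length xs). f ((a#xs)!i)) = f ((a#xs)!0) * (\<Prod>i<length xs. f ((a#xs)!(Suc i)))"
    by (rule prod.lessThan_Suc_shift)
  then show ?case using Cons by simp
qed

lemma form_power_sos:
  fixes p :: "nat \<Rightarrow> real^'d" and d :: "nat \<Rightarrow> real"
  shows "(\<Sum>j<n. \<Sum>k<n. d j * d k * (p j \<bullet> p k) ^ m)
     = (\<Sum>f\<in>Pi\<^sub>E {..<m} (\<lambda>_. UNIV). (\<Sum>j<n. d j * (\<Prod>l<m. p j $ f l))^2)"
proof -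
  have "(\<Sum>j<n. \<Sum>k<n. d j * d k * (p j \<bullet> p k) ^ m)
      = (\<Sum>j<n. \<Sum>k<n. \<Sum>f\<in>Pi\<^sub>E {..<m} (\<lambda>_. UNIV). (d j * (\<Prod>l<m. p j $ f l)) * (d k * (\<Prod>l<m. p k $ f l)))"
    by (simp add: inner_power_PiE sum_distrib_left mult_ac)
  also have "\<dots> = (\<Sum>j<n. \<Sum>f\<in>Pi\<^sub>E {..<m} (\<lambda>_. UNIV). \<Sum>k<n. (d j * (\<Prod>l<m. p j $ f l)) * (d k * (\<Prod>l<m. p k $ f l)))"
    by (rule sum.cong[OF refl], rule sum.swap)
  also have "\<dots> = (\<Sum>f\<in>Pi\<^sub>E {..<m} (\<lambda>_. UNIV). \<Sum>j<n. \<Sum>k<n. (d j * (\<Prod>l<m. p j $ f l)) * (d k * (\<Prod>l<m. p k $ f l)))"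
    by (rule sum.swap)
  also have "\<dots> = (\<Sum>f\<in>Pi\<^sub>E {..<m} (\<lambda>_. UNIV). (\<Sum>j<n. d j * (\<Prod>l<m. p j $ f l))^2)"
    by (simp add: power2_eq_square sum_product)
  finally show ?thesis .
qed

lemma form_power_nonneg:
  fixes p :: "nat \<Rightarrow> real^'d" and d :: "nat \<Rightarrow> real"
  shows "0 \<le> (\<Sum>j<n. \<Sum>k<n. d j * d k * (p j \<bullet> p k) ^ m)"
  unfolding form_power_sos by (intro sum_nonneg) auto

lemma form_power_zero:
  fixes p :: "nat \<Rightarrow> real^'d" and d :: "nat \<Rightarrow> real"
  assumes "(\<Sum>j<n. \<Sum>k<n. d j * d k * (p j \<bullet> p k) ^ length L) = 0"
  shows "(\<Sum>j<n. d j * mono_v L (p j)) = 0"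
proof -
  let ?m = "length L"
  define f where "f = (\<lambda>l. if l < ?m then L ! l else undefined)"
  have fP: "f \<in> Pi\<^sub>E {..<?m} (\<lambda>_. UNIV)" by (auto simp: f_def PiE_def extensional_def)
  have fin: "finite (Pi\<^sub>E {..<?m} (\<lambda>_. UNIV::'d set))" by (intro finite_PiE) auto
  have "\<forall>g\<in>Pi\<^sub>E {..<?m} (\<lambda>_. UNIV). (\<Sum>j<n. d j * (\<Prod>l<?m. p j $ g l))^2 = 0"
    using assms unfolding form_power_sos
    by (subst (asm) sum_nonneg_eq_0_iff[OF fin]) auto
  hence "(\<Sum>j<n. d j * (\<Prod>l<?m. p j $ f l))^2 = 0" using fP by blast
  hence "(\<Sum>j<n. d j * (\<Prod>l<?m. p j $ f l)) = 0" by simp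
  moreover have "\<And>j. (\<Prod>l<?m. p j $ f l) = mono_v L (p j)"
  proof -
    fix j
    have "(\<Prod>l<?m. p j $ f l) = (\<Prod>l<?m. p j $ (L!l))" by (rule prod.cong) (auto simp: f_def)
    also have "\<dots> = mono_v L (p j)" by (simp add: mono_v_def prod_list_map_nth)
    finally show "(\<Prod>l<?m. p j $ f l) = mono_v L (p j)" .
  qed
  ultimately show ?thesis by simp
qed

lemma mono_v_cons: "mono_v (e # L) y = y $ e * mono_v L y"
  by (simp add: mono_v_def)

lemma affine_prod_zero:
  fixes p :: "nat \<Rightarrow> real^'d" and d :: "nat \<Rightarrow> real"
  assumes mono0: "\<And>L. (\<Sum>j<n. d j * mono_v L (p j)) = 0"
    and "finite S"
  shows "(\<Sum>j<n. d j * (\<Prod>i\<in>S. w i \<bullet> p j + b i) * mono_v L (p j)) = 0"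
  using assms(2)
proof (induction S arbitrary: L rule: finite_induct)
  case empty
  then show ?case using mono0 by simp
next
  case (insert a S)
  let ?P = "\<lambda>j. \<Prod>i\<in>S. w i \<bullet> p j + b i"
  have "(\<Sum>j<n. d j * (\<Prod>i\<in>insert a S. w i \<bullet> p j + b i) * mono_v L (p j))
      = (\<Sum>j<n. d j * ?P j * ((\<Sum>e\<in>UNIV. w a $ e * mono_v (e # L) (p j)) + b a * mono_v L (p j)))"
    using insert by (intro sum.cong refl) (simp add: inner_vec_sum mono_v_cons sum_distrib_right sum_distrib_left algebra_simps)
  also have "\<dots> = (\<Sum>e\<in>UNIV. w a $ e * (\<Sum>j<n. d j * ?P j * mono_v (e # L) (p j)))
       + b a * (\<Sum>j<n. d j * ?P j * mono_v L (p j))"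
    apply (simp add: distrib_left sum.distrib sum_distrib_left)
    apply (subst sum.swap)
    apply (simp add: mult_ac)
    done
  also have "\<dots> = 0" using insert.IH by simp
  finally show ?case .
qed

lemma exp_inner_sums:
  "(\<lambda>m. (2*t)^m / fact m * ((x::real^'d) \<bullet> y)^m) sums exp (2*t*(x \<bullet> y))"
  using exp_converges[of "2*t*(x \<bullet> y)"] by (simp add: power_mult_distrib field_simps)

lemma gauss_form:
  fixes p :: "nat \<Rightarrow> real^'d" and c :: "nat \<Rightarrow> real" and t :: real
  assumes "t > 0"
  shows "0 \<le> (\<Sum>j<n. \<Sum>k<n. c j * c k * exp (-t * (norm (p j - p k))^2))"
    and "inj_on p {..<n} \<Longrightarrow> (\<Sum>j<n. \<Sum>k<n. c j * c k * exp (-t * (norm (p j - p k))^2)) = 0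
          \<Longrightarrow> \<forall>j<n. c j = 0"
proof -
  define d where "d j = c j * exp (-t * (norm (p j))^2)" for j
  define E where "E m = (\<Sum>j<n. \<Sum>k<n. d j * d k * (p j \<bullet> p k) ^ m)" for m
  have eq: "c j * c k * exp (-t * (norm (p j - p k))^2) = d j * d k * exp (2*t*(p j \<bullet> p k))" for j k
  proof -
    have "(norm (p j - p k))^2 = (norm (p j))^2 + (norm (p k))^2 - 2 * (p j \<bullet> p k)"
      by (simp add: power2_norm_eq_inner inner_diff_left inner_diff_right inner_commute)
    hence "-t * (norm (p j - p k))^2 = (-t * (norm (p j))^2) + (-t * (norm (p k))^2) + 2*t*(p j \<bullet> p k)"
      by (simp only:) (simp add: algebra_simps)
    hence "exp (-t * (norm (p j - p k))^2) = exp (-t * (norm (p j))^2) * exp (-t * (norm (p k))^2) * exp (2*t*(p j \<bullet> p k))"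
      by (simp only: exp_add)
    thus ?thesis unfolding d_def by (simp add: mult_ac)
  qed
  have sums: "(\<lambda>m. (2*t)^m / fact m * E m) sums (\<Sum>j<n. \<Sum>k<n. c j * c k * exp (-t * (norm (p j - p k))^2))"
  proof -
    have "(\<lambda>m. \<Sum>j<n. \<Sum>k<n. d j * d k * ((2*t)^m / fact m * (p j \<bullet> p k)^m))
          sums (\<Sum>j<n. \<Sum>k<n. d j * d k * exp (2*t*(p j \<bullet> p k)))"
      by (intro sums_sum sums_mult exp_inner_sums)
    moreover have "(\<lambda>m. \<Sum>j<n. \<Sum>k<n. d j * d k * ((2*t)^m / fact m * (p j \<bullet> p k)^m)) = (\<lambda>m. (2*t)^m / fact m * E m)"
      unfolding E_def by (simp add: sum_distrib_left mult_ac)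
    moreover have C: "(\<Sum>j<n. \<Sum>k<n. c j * c k * exp (-t * (norm (p j - p k))^2)) = (\<Sum>j<n. \<Sum>k<n. d j * d k * exp (2*t*(p j \<bullet> p k)))"
      by (simp only: eq)
    ultimately show ?thesis by (subst C) simp
  qed
  have Enn: "0 \<le> (2*t)^m / fact m * E m" for m
    unfolding E_def using assms by (intro mult_nonneg_nonneg form_power_nonneg) auto
  have summ: "summable (\<lambda>m. (2*t)^m / fact m * E m)" using sums by (rule sums_summable)
  have Seq: "(\<Sum>j<n. \<Sum>k<n. c j * c k * exp (-t * (norm (p j - p k))^2)) = (\<Sum>m. (2*t)^m / fact m * E m)"
    using sums by (rule sums_unique)
  show "0 \<le> (\<Sum>j<n. \<Sum>k<n. c j * c k * exp (-t * (norm (p j - p k))^2))"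
    unfolding Seq by (rule suminf_nonneg[OF summ Enn])
  assume inj: "inj_on p {..<n}"
  assume z: "(\<Sum>j<n. \<Sum>k<n. c j * c k * exp (-t * (norm (p j - p k))^2)) = 0"
  have "\<forall>m. (2*t)^m / fact m * E m = 0"
    using suminf_eq_zero_iff[OF summ Enn] z Seq by simp
  hence E0: "E m = 0" for m using assms by auto
  have mono0: "(\<Sum>j<n. d j * mono_v L (p j)) = 0" for L
    using E0[of "length L"] unfolding E_def by (rule form_power_zero)
  show "\<forall>j<n. c j = 0"
  proof (intro allI impI)
    fix k assume k: "k < n"
    define S where "S = {..<n} - {k}"
    have fS: "finite S" by (simp add: S_def)
    have "(\<Sum>j<n. d j * (\<Prod>i\<in>S. (p k - p i) \<bullet> p j + (- ((p k - p i) \<bullet> p i))) * mono_v [] (p j)) = 0"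
      by (rule affine_prod_zero[OF mono0 fS])
    hence "(\<Sum>j<n. d j * (\<Prod>i\<in>S. (p k - p i) \<bullet> (p j - p i))) = 0"
      by (simp add: mono_v_def inner_diff_right)
    also have "(\<Sum>j<n. d j * (\<Prod>i\<in>S. (p k - p i) \<bullet> (p j - p i))) = d k * (\<Prod>i\<in>S. (p k - p i) \<bullet> (p k - p i))"
    proof -
      have "(\<Sum>j<n. d j * (\<Prod>i\<in>S. (p k - p i) \<bullet> (p j - p i))) = (\<Sum>j\<in>{k}. d j * (\<Prod>i\<in>S. (p k - p i) \<bullet> (p j - p i)))"
      proof (rule sum.mono_neutral_right)
        show "\<forall>j\<in>{..<n} - {k}. d j * (\<Prod>i\<in>S. (p k - p i) \<bullet> (p j - p i)) = 0"
        proof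
          fix j assume "j \<in> {..<n} - {k}"
          hence "j \<in> S" by (simp add: S_def)
          thus "d j * (\<Prod>i\<in>S. (p k - p i) \<bullet> (p j - p i)) = 0"
          proof -
            have "(\<Prod>i\<in>S. (p k - p i) \<bullet> (p j - p i)) = 0"
              using fS \<open>j \<in> S\<close> by (auto simp: prod_zero_iff intro!: bexI[of _ j])
            thus ?thesis by simp
          qed
        qed
      qed (use k in auto)
      thus ?thesis by simp
    qed
    finally have dk: "d k * (\<Prod>i\<in>S. (p k - p i) \<bullet> (p k - p i)) = 0" .
    have "(\<Prod>i\<in>S. (p k - p i) \<bullet> (p k - p i)) \<noteq> 0"
    proof -
      have "\<forall>i\<in>S. (p k - p i) \<bullet> (p k - p i) \<noteq> 0"
      proof
        fix i assume "i \<in> S"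
        hence "i < n" "i \<noteq> k" by (auto simp: S_def)
        hence "p k \<noteq> p i" using inj k by (metis inj_on_def lessThan_iff)
        thus "(p k - p i) \<bullet> (p k - p i) \<noteq> 0" by simp
      qed
      thus ?thesis using fS by simp
    qed
    with dk have "d k = 0" by simp
    thus "c k = 0" by (simp add: d_def)
  qed
qed




lemma gamma_bochner:
  fixes a :: real assumes a: "0 < a"
  shows "has_bochner_integral lborel (\<lambda>t. indicator {0<..} t * (t powr (a-1) * exp (-t))) (Gamma a)"
proof -
  have eq: "indicator {0<..} t * (t powr (a-1) * exp (-t)) = indicator {0..} t * t powr (a - 1) / exp t" for t :: real
    by (cases "t < 0"; cases "t = 0") (auto simp: indicator_def exp_minus field_simps)
  have "Gamma a = (\<integral>\<^sup>+t. ennreal (indicator {0..} t * t powr (a - 1) / exp t) \<partial>lborel)"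
    by (rule Gamma_conv_nn_integral_real[OF a])
  hence nn: "(\<integral>\<^sup>+t. ennreal (indicator {0<..} t * (t powr (a-1) * exp (-t))) \<partial>lborel) = ennreal (Gamma a)"
    by (simp add: eq)
  show ?thesis
    by (rule has_bochner_integral_nn_integral[OF _ _ _ nn]) (auto simp: Gamma_real_pos a less_imp_le)
qed

lemma gamma_integrable:
  fixes a :: real assumes a: "0 < a"
  shows "integrable lborel (\<lambda>t. indicator {0<..} t * (t powr (a-1) * exp (-t)))"
  using gamma_bochner[OF a] by (rule integrable.intros)

lemma gamma_integral:
  fixes a :: real assumes a: "0 < a"
  shows "(\<integral>t. indicator {0<..} t * (t powr (a-1) * exp (-t)) \<partial>lborel) = Gamma a"
  using gamma_bochner[OF a] by (rule has_bochner_integral_integral_eq)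

lemma integral_even_split:
  fixes F :: "real \<Rightarrow> real"
  assumes F: "integrable lborel F"
  shows "(\<integral>x. F x \<partial>lborel) = (\<integral>x. indicator {0..} x * (F x + F (-x)) \<partial>lborel)"
proof -
  have Fm: "integrable lborel (\<lambda>x. F (0 + (-1) * x))"
    by (rule lborel_integrable_real_affine[OF F]) simp
  hence Fm': "integrable lborel (\<lambda>x. F (-x))" by simp
  have i1: "integrable lborel (\<lambda>x. F x * indicator {0..} x)"
    by (rule integrable_real_mult_indicator[OF _ F]) simp
  have i2: "integrable lborel (\<lambda>x. F x * indicator {..<0} x)"
    by (rule integrable_real_mult_indicator[OF _ F]) simp
  have i3: "integrable lborel (\<lambda>x. F (-x) * indicator {0..} x)"
    by (rule integrable_real_mult_indicator[OF _ Fm']) simp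
  have "(\<integral>x. F x \<partial>lborel) = (\<integral>x. F x * indicator {0..} x + F x * indicator {..<0} x \<partial>lborel)"
    by (intro Bochner_Integration.integral_cong refl) (auto simp: indicator_def)
  also have "\<dots> = (\<integral>x. F x * indicator {0..} x \<partial>lborel) + (\<integral>x. F x * indicator {..<0} x \<partial>lborel)"
    by (rule Bochner_Integration.integral_add[OF i1 i2])
  also have "(\<integral>x. F x * indicator {..<0} x \<partial>lborel) = \<bar>-1\<bar> *\<^sub>R (\<integral>x. F (0 + (-1) * x) * indicator {..<0} (0 + (-1) * x) \<partial>lborel)"
    by (rule lborel_integral_real_affine) simp
  also have "\<dots> = (\<integral>x. F (-x) * indicator {0<..} x \<partial>lborel)"
    by (simp add: indicator_def)
  also have "\<dots> = (\<integral>x. F (-x) * indicator {0..} x \<partial>lborel)"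
  proof (rule integral_cong_AE)
    have i4: "integrable lborel (\<lambda>x. F (-x) * indicator {0<..} x)"
      by (rule integrable_real_mult_indicator[OF _ Fm']) simp
    show "(\<lambda>x. F (-x) * indicator {0<..} x) \<in> borel_measurable lborel"
      using i4 by (rule borel_measurable_integrable)
    show "(\<lambda>x. F (-x) * indicator {0..} x) \<in> borel_measurable lborel"
      using i3 by (rule borel_measurable_integrable)
    show "AE x in lborel. F (-x) * indicator {0<..} x = F (-x) * indicator {0..} x"
      using AE_lborel_singleton[of 0] by eventually_elim (auto simp: indicator_def)
  qed
  also have "(\<integral>x. F x * indicator {0..} x \<partial>lborel) + \<dots> = (\<integral>x. F x * indicator {0..} x + F (-x) * indicator {0..} x \<partial>lborel)"
    by (rule Bochner_Integration.integral_add[OF i1 i3, symmetric])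
  also have "\<dots> = (\<integral>x. indicator {0..} x * (F x + F (-x)) \<partial>lborel)"
    by (intro Bochner_Integration.integral_cong refl) (simp add: algebra_simps)
  finally show ?thesis .
qed

lemma bessel_subst:
  fixes a r :: real assumes a: "0 < a" and r: "0 < r"
  shows "integrable lborel (\<lambda>u. exp (-(r * cosh u)) * exp (a*u))"
    and "(\<integral>u. exp (-(r * cosh u)) * exp (a*u) \<partial>lborel)
         = (\<integral>s. indicator {0<..} s * (exp (-s - r^2/(4* s)) * s powr (a-1)) \<partial>lborel) / (r/2) powr a"
proof -
  define f where "f s = exp (-s - r^2/(4* s)) * s powr (a-1)" for s :: real
  define F where "F u = exp (-(r * cosh u)) * exp (a*u)" for u :: real
  define g where "g s = ln s + ln (2/r)" for s :: real
  define g' where "g' s = 1 / s" for s :: real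
  have fmeas: "(\<lambda>s. indicator {0<..} s * f s) \<in> borel_measurable lborel"
    unfolding f_def by measurable
  have fint: "integrable lborel (\<lambda>s. indicator {0<..} s * f s)"
  proof (rule Bochner_Integration.integrable_bound[OF gamma_integrable[OF a] fmeas])
    show "AE x in lborel. norm (indicator {0<..} x * f x) \<le> norm (indicator {0<..} x * (x powr (a-1) * exp (-x)))"
    proof (rule AE_I2)
      fix x :: real
      show "norm (indicator {0<..} x * f x) \<le> norm (indicator {0<..} x * (x powr (a-1) * exp (-x)))"
      proof (cases "x > 0")
        case True
        have "exp (-x - r^2/(4*x)) \<le> exp (-x)" using True by simp
        hence "exp (-x - r^2/(4*x)) * x powr (a-1) \<le> exp (-x) * x powr (a-1)"
          by (rule mult_right_mono) simp
        thus ?thesis using True by (simp add: f_def abs_mult mult_ac)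
      qed (simp add: indicator_def)
    qed
  qed
  have key: "F (g s) * g' s = f s / (r/2) powr a" if s: "s > 0" for s
  proof -
    have e1: "exp (g s) = 2* s/r" using s r by (simp add: g_def exp_add)
    have e2: "exp (- g s) = r/(2* s)" using s r by (simp add: exp_minus e1 field_simps)
    have ch: "r * cosh (g s) = s + r^2/(4* s)"
      unfolding cosh_def using e1 e2 s r by (simp add: field_simps power2_eq_square)
    have ea: "exp (a * g s) = (2* s/r) powr a"
      using s r by (simp add: powr_def g_def ln_mult ln_div algebra_simps)
    have "(2* s/r) powr a = s powr a / (r/2) powr a"
      using s r by (simp add: powr_divide powr_mult[symmetric] field_simps)
    moreover have "s powr a / s = s powr (a-1)" using s by (simp add: powr_diff)
    ultimately have EA: "exp (a * g s) * g' s = s powr (a-1) / (r/2) powr a"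
      using ea by (simp add: g'_def) (metis divide_divide_eq_left mult.commute)
    have EC: "exp (-(r * cosh (g s))) = exp (-s - r^2/(4* s))" using ch by simp
    have "F (g s) * g' s = exp (-(r * cosh (g s))) * (exp (a * g s) * g' s)" by (simp add: F_def mult_ac)
    also have "\<dots> = exp (-s - r^2/(4* s)) * (s powr (a-1) / (r/2) powr a)" by (simp only: EA EC)
    also have "\<dots> = f s / (r/2) powr a" by (simp add: f_def)
    finally show ?thesis .
  qed
  have fgint: "set_integrable lborel (einterval 0 \<infinity>) (\<lambda>x. F (g x) * g' x)"
  proof -
    have "integrable lborel (\<lambda>s. indicator {0<..} s * f s / (r/2) powr a)"
      using fint by (rule integrable_divide)
    moreover have "indicator {0<..} x * f x / (r/2) powr a = indicator {0<..} x *\<^sub>R (F (g x) * g' x)" for x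
      by (cases "x > 0") (simp_all add: key indicator_def)
    ultimately show ?thesis
      by (simp add: set_integrable_def zero_ereal_def)
  qed
  note sub = interval_integral_substitution_nonneg[of 0 \<infinity> g g' F "-\<infinity>" \<infinity>]
  have prem1: "DERIV g x :> g' x" if "0 < ereal x" "ereal x < \<infinity>" for x
    using that unfolding g_def g'_def by (auto intro!: derivative_eq_intros simp: zero_ereal_def)
  have prem2: "isCont F (g x)" for x unfolding F_def by (intro continuous_intros)
  have prem3: "isCont g' x" if "0 < ereal x" for x
    using that unfolding g'_def by (auto intro!: continuous_intros simp: zero_ereal_def)
  have prem4: "0 \<le> F (g x)" for x unfolding F_def by simp
  have prem5: "0 \<le> g' x" if "0 \<le> ereal x" for x using that unfolding g'_def by (simp add: zero_ereal_def)
  have limA: "((ereal \<circ> g \<circ> real_of_ereal) \<longlongrightarrow> -\<infinity>) (at_right 0)"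
  proof -
    have "filterlim (\<lambda>x. ln (2/r) + ln x) at_bot (at_right 0)"
      by (subst filterlim_tendsto_add_at_bot_iff[OF tendsto_const]) (rule ln_at_0)
    hence "filterlim (\<lambda>x. ln x + ln (2/r)) at_bot (at_right 0)" by (simp add: add.commute)
    thus ?thesis unfolding zero_ereal_def o_assoc ereal_tendsto_simps g_def .
  qed
  have limB: "((ereal \<circ> g \<circ> real_of_ereal) \<longlongrightarrow> \<infinity>) (at_left \<infinity>)"
  proof -
    have "filterlim (\<lambda>x. ln (2/r) + ln x) at_top at_top"
      by (rule filterlim_tendsto_add_at_top[OF tendsto_const ln_at_top])
    hence "filterlim (\<lambda>x. ln x + ln (2/r)) at_top at_top" by (simp add: add.commute)
    thus ?thesis unfolding o_assoc ereal_tendsto_simps g_def .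
  qed
  have S1: "set_integrable lborel (einterval (-\<infinity>) \<infinity>) F"
    and S2: "(LBINT x=-\<infinity>..\<infinity>. F x) = (LBINT x=0..\<infinity>. F (g x) * g' x)"
    using sub[OF _ prem1 prem2 prem3 prem4 prem5 limA limB fgint] by auto
  show "integrable lborel (\<lambda>u. exp (-(r * cosh u)) * exp (a*u))"
    using S1 by (simp add: set_integrable_def F_def)
  have "(LBINT x=-\<infinity>..\<infinity>. F x) = (\<integral>u. F u \<partial>lborel)"
    by (simp add: interval_lebesgue_integral_def set_lebesgue_integral_def)
  moreover have "(LBINT x=0..\<infinity>. F (g x) * g' x) = (\<integral>s. indicator {0<..} s * f s / (r/2) powr a \<partial>lborel)"
  proof -
    have "(LBINT x=0..\<infinity>. F (g x) * g' x) = (\<integral>x. indicator {0<..} x *\<^sub>R (F (g x) * g' x) \<partial>lborel)"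
      by (simp add: interval_lebesgue_integral_def set_lebesgue_integral_def zero_ereal_def)
    also have "\<dots> = (\<integral>s. indicator {0<..} s * f s / (r/2) powr a \<partial>lborel)"
      by (intro Bochner_Integration.integral_cong refl) (simp add: key indicator_def)
    finally show ?thesis .
  qed
  ultimately show "(\<integral>u. exp (-(r * cosh u)) * exp (a*u) \<partial>lborel)
         = (\<integral>s. indicator {0<..} s * (exp (-s - r^2/(4* s)) * s powr (a-1)) \<partial>lborel) / (r/2) powr a"
    using S2 by (simp add: F_def f_def)
qed

lemma besselK_eq:
  fixes a r :: real assumes a: "0 < a" and r: "0 < r"
  shows "2 * besselK a r = (\<integral>s. indicator {0<..} s * (exp (-s - r^2/(4* s)) * s powr (a-1)) \<partial>lborel) / (r/2) powr a"
proof -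
  let ?F = "\<lambda>u. exp (-(r * cosh u)) * exp (a*u)"
  have "(\<integral>u. ?F u \<partial>lborel) = (\<integral>x. indicator {0..} x * (?F x + ?F (-x)) \<partial>lborel)"
    by (rule integral_even_split[OF bessel_subst(1)[OF a r]])
  also have "\<dots> = (\<integral>x. 2 * (indicator {0..} x *\<^sub>R (exp (- r * cosh x) * cosh (a * x))) \<partial>lborel)"
    by (intro Bochner_Integration.integral_cong refl) (simp add: cosh_def algebra_simps)
  also have "\<dots> = 2 * besselK a r"
    by (simp add: besselK_def set_lebesgue_integral_def)
  finally show ?thesis using bessel_subst(2)[OF a r] by simp
qed

lemma matern_mixture:
  fixes h :: "'a::real_normed_vector"
  assumes a: "\<nu> - real d / 2 > 0"
  shows "matern \<nu> d h = (\<integral>s. indicator {0<..} s * (s powr (\<nu> - real d / 2 - 1) * exp (-s) * exp (- ((norm h)\<^sup>2) / (4 * s))) \<partial>lborel) / Gamma (\<nu> - real d / 2)"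
proof -
  define a where "a = \<nu> - real d / 2"
  have a0: "0 < a" using a by (simp add: a_def)
  have G: "Gamma a > 0" using a0 by (rule Gamma_real_pos)
  show ?thesis
  proof (cases "h = 0")
    case True
    have "(\<integral>s. indicator {0<..} s * (s powr (a - 1) * exp (-s) * exp (- ((norm h)\<^sup>2) / (4 * s))) \<partial>lborel)
        = (\<integral>s. indicator {0<..} s * (s powr (a - 1) * exp (-s)) \<partial>lborel)"
      using True by simp
    also have "\<dots> = Gamma a" by (rule gamma_integral[OF a0])
    finally show ?thesis using True G by (simp add: matern_def a_def[symmetric])
  next
    case False
    define r where "r = norm h"
    have r: "0 < r" using False by (simp add: r_def)
    define I where "I = (\<integral>s. indicator {0<..} s * (exp (-s - r^2/(4* s)) * s powr (a-1)) \<partial>lborel)"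
    have I: "I = (\<integral>s. indicator {0<..} s * (s powr (a - 1) * exp (-s) * exp (- ((norm h)\<^sup>2) / (4 * s))) \<partial>lborel)"
      unfolding I_def r_def
      by (intro Bochner_Integration.integral_cong refl) (simp add: exp_diff exp_minus field_simps)
    have K: "besselK a r = I / (2 * (r/2) powr a)" using besselK_eq[OF a0 r] by (simp add: I_def field_simps)
    have "matern \<nu> d h = 1 / (Gamma a * 2 powr (a - 1)) * r powr a * besselK a r"
      using False by (simp add: matern_def a_def[symmetric] r_def Let_def)
    also have "\<dots> = I / Gamma a * (r powr a / (2 powr (a - 1) * (2 * (r/2) powr a)))"
      by (simp add: K field_simps)
    also have "r powr a / (2 powr (a - 1) * (2 * (r/2) powr a)) = 1"
    proof -
      have "(r/2) powr a = r powr a / 2 powr a" using r by (simp add: powr_divide)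
      moreover have "2 powr (a - 1) * 2 = (2::real) powr a" by (simp add: powr_diff)
      ultimately have "2 powr (a - 1) * (2 * (r/2) powr a) = r powr a"
        by (simp only: mult.assoc[symmetric] mult.commute[of "2 powr (a - 1)" 2]) simp
      thus ?thesis using r by simp
    qed
    finally show ?thesis by (simp add: I a_def)
  qed
qed





definition Wf :: "real \<Rightarrow> real \<Rightarrow> real \<Rightarrow> real" where
  "Wf a \<rho> s = indicator {0<..} s * (s powr (a - 1) * exp (-s) * exp (- \<rho> / (4 * s)))"

definition Gf :: "real \<Rightarrow> real \<Rightarrow> real" where
  "Gf a \<rho> = (\<integral>s. Wf a \<rho> s \<partial>lborel) / Gamma a"

lemma matern_Gf:
  assumes "\<nu> - real d / 2 > 0"
  shows "matern \<nu> d h = Gf (\<nu> - real d / 2) ((norm h)\<^sup>2)"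
  unfolding Gf_def Wf_def by (subst matern_mixture[OF assms]) simp

lemma Wf_bound: "0 \<le> \<rho> \<Longrightarrow> \<bar>Wf a \<rho> s\<bar> \<le> indicator {0<..} s * (s powr (a-1) * exp (-s))"
  by (auto simp: Wf_def indicator_def abs_mult mult_left_le)

lemma Wf_nonneg: "0 \<le> Wf a \<rho> s"
  by (simp add: Wf_def)

lemma Wf_meas[measurable]: "(\<lambda>s. Wf a \<rho> s) \<in> borel_measurable lborel"
  unfolding Wf_def by measurable

lemma Wf_integrable: assumes "0 < a" "0 \<le> \<rho>" shows "integrable lborel (Wf a \<rho>)"
  by (rule Bochner_Integration.integrable_bound[OF gamma_integrable[OF assms(1)]])
     (use Wf_bound[OF assms(2)] in \<open>auto intro!: AE_I2\<close>)

lemma Wf_mono: "0 \<le> \<rho>1 \<Longrightarrow> \<rho>1 \<le> \<rho>2 \<Longrightarrow> Wf a \<rho>2 s \<le> Wf a \<rho>1 s"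
  by (cases "s > 0") (auto simp: Wf_def indicator_def intro!: mult_left_mono divide_right_mono)

lemma Gf_mono: assumes "0 < a" "0 \<le> \<rho>1" "\<rho>1 \<le> \<rho>2" shows "Gf a \<rho>2 \<le> Gf a \<rho>1"
proof -
  have "(\<integral>s. Wf a \<rho>2 s \<partial>lborel) \<le> (\<integral>s. Wf a \<rho>1 s \<partial>lborel)"
    using assms by (intro integral_mono Wf_integrable Wf_mono) auto
  thus ?thesis unfolding Gf_def using Gamma_real_pos[OF assms(1)] by (simp add: divide_right_mono)
qed

lemma Gf_0: assumes "0 < a" shows "Gf a 0 = 1"
  unfolding Gf_def Wf_def using gamma_integral[OF assms] Gamma_real_pos[OF assms] by simp

lemma Gf_nonneg: "0 < a \<Longrightarrow> 0 \<le> Gf a \<rho>"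
  unfolding Gf_def using Gamma_real_pos[of a] by (simp add: Wf_nonneg)

lemma Gf_le1: "0 < a \<Longrightarrow> 0 \<le> \<rho> \<Longrightarrow> Gf a \<rho> \<le> 1"
  using Gf_mono[of a 0 \<rho>] Gf_0[of a] by simp

lemma Gf_meas: "Gf a \<in> borel_measurable borel"
proof -
  have "(\<lambda>\<rho>. \<integral>s. Wf a \<rho> s \<partial>lborel) \<in> borel_measurable borel"
    unfolding Wf_def by measurable
  thus ?thesis unfolding Gf_def by measurable
qed

lemma Gf_cont0:
  assumes a: "0 < a" and e: "0 < e"
  shows "\<exists>\<delta>>0. \<forall>\<rho>. 0 \<le> \<rho> \<and> \<rho> < \<delta> \<longrightarrow> 1 - e \<le> Gf a \<rho>"
proof -
  have "((\<lambda>t. \<integral>s. Wf a (1/t) s \<partial>lborel) \<longlongrightarrow> (\<integral>s. Wf a 0 s \<partial>lborel)) at_top"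
  proof (rule integral_dominated_convergence_at_top[where w = "Wf a 0"])
    show "Wf a 0 \<in> borel_measurable lborel" by measurable
    show "\<And>t. Wf a (1/t) \<in> borel_measurable lborel" by measurable
    show "integrable lborel (Wf a 0)" using a by (intro Wf_integrable) auto
    show "AE x in lborel. ((\<lambda>t. Wf a (1/t) x) \<longlongrightarrow> Wf a 0 x) at_top"
    proof (rule AE_I2)
      fix x :: real
      show "((\<lambda>t. Wf a (1/t) x) \<longlongrightarrow> Wf a 0 x) at_top"
      proof (cases "x > 0")
        case True
        have "((\<lambda>t::real. 1/t) \<longlongrightarrow> 0) at_top"
          using tendsto_inverse_0_at_top[OF filterlim_ident] by (simp add: inverse_eq_divide)
        hence "((\<lambda>t. indicator {0<..} x * (x powr (a - 1) * exp (-x) * exp (- (1/t) / (4 * x)))) \<longlongrightarrow>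
                indicator {0<..} x * (x powr (a - 1) * exp (-x) * exp (- 0 / (4 * x)))) at_top"
          using True by (intro tendsto_intros) auto
        thus ?thesis by (simp add: Wf_def)
      qed (simp add: Wf_def indicator_def)
    qed
    show "\<forall>\<^sub>F t in at_top. AE x in lborel. norm (Wf a (1/t) x) \<le> Wf a 0 x"
      using eventually_gt_at_top[of 0]
      by eventually_elim (auto intro!: AE_I2 simp: Wf_nonneg intro: Wf_mono)
  qed
  hence "((\<lambda>t. Gf a (1/t)) \<longlongrightarrow> Gf a 0) at_top"
    unfolding Gf_def using Gamma_real_pos[OF a] by (intro tendsto_intros) auto
  hence "((\<lambda>t. Gf a (1/t)) \<longlongrightarrow> 1) at_top" using Gf_0[OF a] by simp
  hence "\<forall>\<^sub>F t in at_top. 1 - e < Gf a (1/t)"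
    using e by (intro order_tendstoD) auto
  hence "\<forall>\<^sub>F t in at_top. t > 0 \<and> 1 - e < Gf a (1/t)"
    using eventually_gt_at_top[of 0] by eventually_elim auto
  then obtain t where t: "t > 0" "1 - e < Gf a (1/t)"
    using eventually_happens'[OF trivial_limit_at_top_linorder] by blast
  show ?thesis
  proof (intro exI[of _ "1/t"] conjI allI impI)
    show "0 < 1/t" using t by simp
    fix \<rho> assume "0 \<le> \<rho> \<and> \<rho> < 1/t"
    hence "Gf a (1/t) \<le> Gf a \<rho>" using a by (intro Gf_mono) auto
    thus "1 - e \<le> Gf a \<rho>" using t by simp
  qed
qed

lemma not_AE_nonpos: "\<not> (AE x in lborel. (x::real) \<le> 0)"
proof
  assume "AE x in lborel. (x::real) \<le> 0"
  hence "emeasure lborel ({0<..} :: real set) = 0"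
    by (subst (asm) AE_iff_measurable[of "{0<..}"]) auto
  moreover have "emeasure lborel ({1..2} :: real set) \<le> emeasure lborel ({0<..} :: real set)"
    by (rule emeasure_mono) auto
  ultimately show False by simp
qed

lemma matern_psd:
  fixes zs :: "(real^'d) list" and c :: "nat \<Rightarrow> real"
  assumes a: "\<nu> - real d / 2 > 0"
  shows "0 \<le> (\<Sum>j<length zs. \<Sum>k<length zs. c j * c k * matern \<nu> d (zs!j - zs!k))"
    and "distinct zs \<Longrightarrow> (\<exists>j<length zs. c j \<noteq> 0) \<Longrightarrow>
         0 < (\<Sum>j<length zs. \<Sum>k<length zs. c j * c k * matern \<nu> d (zs!j - zs!k))"
proof -
  define A where "A = \<nu> - real d / 2"
  have A: "0 < A" using a by (simp add: A_def)
  have Gp: "0 < Gamma A" using Gamma_real_pos[OF A] .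
  define n where "n = length zs"
  define p where "p j = zs ! j" for j
  define \<rho> where "\<rho> j k = (norm (p j - p k))\<^sup>2" for j k
  define Q where "Q s = (\<Sum>j<n. \<Sum>k<n. c j * c k * exp (- (1/(4* s)) * (norm (p j - p k))\<^sup>2))" for s :: real
  define H where "H s = (\<Sum>j<n. \<Sum>k<n. c j * c k * Wf A (\<rho> j k) s)" for s
  have Hq: "H s = indicator {0<..} s * (s powr (A - 1) * exp (-s)) * Q s" for s
  proof -
    have "H s = (\<Sum>j<n. \<Sum>k<n. indicator {0<..} s * (s powr (A - 1) * exp (-s)) * (c j * c k * exp (- (1/(4* s)) * (norm (p j - p k))\<^sup>2)))"
      unfolding H_def Wf_def \<rho>_def by (intro sum.cong refl) (simp add: mult_ac)
    thus ?thesis by (simp add: Q_def sum_distrib_left)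
  qed
  have Hint: "integrable lborel H"
    unfolding H_def using A by (intro Bochner_Integration.integrable_sum Bochner_Integration.integrable_mult_right Wf_integrable) (auto simp: \<rho>_def)
  have eq: "(\<Sum>j<n. \<Sum>k<n. c j * c k * matern \<nu> d (zs!j - zs!k)) = (\<integral>s. H s \<partial>lborel) / Gamma A"
  proof -
    have "(\<Sum>j<n. \<Sum>k<n. c j * c k * matern \<nu> d (zs!j - zs!k)) = (\<Sum>j<n. \<Sum>k<n. c j * c k * (\<integral>s. Wf A (\<rho> j k) s \<partial>lborel)) / Gamma A"
      using a by (simp add: matern_Gf Gf_def A_def[symmetric] \<rho>_def p_def sum_divide_distrib)
    also have "(\<Sum>j<n. \<Sum>k<n. c j * c k * (\<integral>s. Wf A (\<rho> j k) s \<partial>lborel)) = (\<integral>s. H s \<partial>lborel)"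
      unfolding H_def using A
      by (subst Bochner_Integration.integral_sum, (intro Bochner_Integration.integrable_sum Bochner_Integration.integrable_mult_right Wf_integrable; simp add: \<rho>_def))+
         (simp add: \<rho>_def)
    finally show ?thesis .
  qed
  have Qnn: "0 \<le> Q s" if "s > 0" for s
    unfolding Q_def using that by (intro gauss_form(1)) simp
  have Hnn: "0 \<le> H s" for s
    unfolding Hq using Qnn by (cases "s > 0") (auto simp: indicator_def)
  show "0 \<le> (\<Sum>j<length zs. \<Sum>k<length zs. c j * c k * matern \<nu> d (zs!j - zs!k))"
    unfolding n_def[symmetric] eq using Gp Hnn by (simp add: integral_nonneg)
  assume dist: "distinct zs" and cnz: "\<exists>j<length zs. c j \<noteq> 0"
  have inj: "inj_on p {..<n}" unfolding p_def n_def using dist by (simp add: inj_on_def nth_eq_iff_index_eq)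
  have Qpos: "0 < Q s" if "s > 0" for s
  proof -
    have "Q s \<noteq> 0"
    proof
      assume "Q s = 0"
      hence "\<forall>j<n. c j = 0" unfolding Q_def using that inj gauss_form(2)[where t="1/(4* s)" and p=p and n=n and c=c] by simp
      thus False using cnz by (auto simp: n_def)
    qed
    thus ?thesis using Qnn[OF that] by simp
  qed
  have "(\<integral>s. H s \<partial>lborel) \<noteq> 0"
  proof
    assume "(\<integral>s. H s \<partial>lborel) = 0"
    hence "AE s in lborel. H s = 0"
      using integral_nonneg_eq_0_iff_AE[OF Hint] Hnn by simp
    hence "AE s in lborel. (s::real) \<le> 0"
    proof eventually_elim
      fix s assume "H s = 0"
      show "s \<le> 0"
      proof (rule ccontr)
        assume "\<not> s \<le> 0"
        hence sp: "s > 0" by simp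
        have "0 < s powr (A - 1) * exp (-s) * Q s" using sp Qpos[OF sp] by simp
        thus False using \<open>H s = 0\<close> sp by (simp add: Hq)
      qed
    qed
    thus False using not_AE_nonpos by simp
  qed
  hence "0 < (\<integral>s. H s \<partial>lborel)" using Hnn by (simp add: integral_nonneg order_le_neq_trans)
  thus "0 < (\<Sum>j<length zs. \<Sum>k<length zs. c j * c k * matern \<nu> d (zs!j - zs!k))"
    unfolding n_def[symmetric] eq using Gp by simp
qed





lemma matern_sym: "matern \<nu> d (- h) = matern \<nu> d h"
  by (simp add: matern_def Let_def)

lemma matern_zero: "matern \<nu> d 0 = 1"
  by (simp add: matern_def)

lemma ext_psd:
  fixes \<Psi> :: "'a::real_normed_vector \<Rightarrow> real" and xs :: "'a list"
  assumes psd: "\<And>zs c. 0 \<le> (\<Sum>j<length zs. \<Sum>k<length zs. c j * c k * \<Psi> (zs!j - zs!k))"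
    and sym: "\<And>h. \<Psi> (-h) = \<Psi> h" and z: "\<Psi> 0 = 1"
  shows "0 \<le> (\<Sum>j<length xs. \<Sum>k<length xs. u j * u k * \<Psi> (xs!j - xs!k))
              - 2*\<alpha>*(\<Sum>j<length xs. u j * \<Psi> (x - xs!j)) - 2*\<beta>*(\<Sum>j<length xs. u j * \<Psi> (y - xs!j))
              + \<alpha>^2 + 2*\<alpha>*\<beta>*\<Psi> (x - y) + \<beta>^2"
proof -
  define n where "n = length xs"
  define zs where "zs = xs @ [x, y]"
  define c where "c j = (if j < n then - u j else if j = n then \<alpha> else \<beta>)" for j
  have lz: "length zs = Suc (Suc n)" by (simp add: zs_def n_def)
  have zj: "j < n \<Longrightarrow> zs ! j = xs ! j" for j by (simp add: zs_def n_def nth_append)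
  have zn: "zs ! n = x" by (simp add: zs_def n_def nth_append)
  have zn1: "zs ! Suc n = y" by (simp add: zs_def n_def nth_append)
  have cj: "j < n \<Longrightarrow> c j = - u j" for j by (simp add: c_def)
  have cn: "c n = \<alpha>" by (simp add: c_def)
  have cn1: "c (Suc n) = \<beta>" by (simp add: c_def)
  define T where "T j k = c j * c k * \<Psi> (zs!j - zs!k)" for j k
  have "0 \<le> (\<Sum>j<length zs. \<Sum>k<length zs. T j k)" using psd unfolding T_def .
  also have "(\<Sum>j<length zs. \<Sum>k<length zs. T j k)
      = (\<Sum>j<n. \<Sum>k<n. T j k) + (\<Sum>j<n. T j n) + (\<Sum>j<n. T j (Suc n))
        + (\<Sum>k<n. T n k) + T n n + T n (Suc n) + (\<Sum>k<n. T (Suc n) k) + T (Suc n) n + T (Suc n) (Suc n)"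
    unfolding lz by (simp add: sum.distrib)
  also have "(\<Sum>j<n. \<Sum>k<n. T j k) = (\<Sum>j<n. \<Sum>k<n. u j * u k * \<Psi> (xs!j - xs!k))"
    by (intro sum.cong refl) (simp add: T_def cj zj)
  also have "(\<Sum>j<n. T j n) = - \<alpha> * (\<Sum>j<n. u j * \<Psi> (x - xs!j))"
  proof -
    have "(\<Sum>j<n. T j n) = (\<Sum>j<n. - \<alpha> * (u j * \<Psi> (x - xs!j)))"
    proof (intro sum.cong refl)
      fix j assume "j \<in> {..<n}"
      hence j: "j < n" by simp
      have "\<Psi> (xs!j - x) = \<Psi> (x - xs!j)" using sym[of "x - xs!j"] by simp
      thus "T j n = - \<alpha> * (u j * \<Psi> (x - xs!j))" using j by (simp add: T_def cj zj zn cn)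
    qed
    thus ?thesis by (simp add: sum_distrib_left)
  qed
  also have "(\<Sum>j<n. T j (Suc n)) = - \<beta> * (\<Sum>j<n. u j * \<Psi> (y - xs!j))"
  proof -
    have "(\<Sum>j<n. T j (Suc n)) = (\<Sum>j<n. - \<beta> * (u j * \<Psi> (y - xs!j)))"
    proof (intro sum.cong refl)
      fix j assume "j \<in> {..<n}"
      hence j: "j < n" by simp
      have "\<Psi> (xs!j - y) = \<Psi> (y - xs!j)" using sym[of "y - xs!j"] by simp
      thus "T j (Suc n) = - \<beta> * (u j * \<Psi> (y - xs!j))" using j by (simp add: T_def cj zj zn1 cn1)
    qed
    thus ?thesis by (simp add: sum_distrib_left)
  qed
  also have "(\<Sum>k<n. T n k) = - \<alpha> * (\<Sum>j<n. u j * \<Psi> (x - xs!j))"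
  proof -
    have "(\<Sum>k<n. T n k) = (\<Sum>j<n. - \<alpha> * (u j * \<Psi> (x - xs!j)))"
      by (intro sum.cong refl) (simp add: T_def cj zj zn cn)
    thus ?thesis by (simp add: sum_distrib_left)
  qed
  also have "(\<Sum>k<n. T (Suc n) k) = - \<beta> * (\<Sum>j<n. u j * \<Psi> (y - xs!j))"
  proof -
    have "(\<Sum>k<n. T (Suc n) k) = (\<Sum>j<n. - \<beta> * (u j * \<Psi> (y - xs!j)))"
      by (intro sum.cong refl) (simp add: T_def cj zj zn1 cn1)
    thus ?thesis by (simp add: sum_distrib_left)
  qed
  also have "T n n = \<alpha>^2" by (simp add: T_def zn cn z power2_eq_square)
  also have "T (Suc n) (Suc n) = \<beta>^2" by (simp add: T_def zn1 cn1 z power2_eq_square)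
  also have "T n (Suc n) = \<alpha> * \<beta> * \<Psi> (x - y)" by (simp add: T_def zn zn1 cn cn1)
  also have "T (Suc n) n = \<alpha> * \<beta> * \<Psi> (x - y)"
    using sym[of "x - y"] by (simp add: T_def zn zn1 cn cn1)
  finally show ?thesis unfolding n_def by (simp add: algebra_simps)
qed

lemma abs_le_1_plus_sq: "\<bar>z::real\<bar> \<le> 1 + z\<^sup>2"
proof (cases "\<bar>z\<bar> \<le> 1")
  case True
  thus ?thesis using zero_le_power2[of z] by linarith
next
  case False
  hence "\<bar>z\<bar> * 1 \<le> \<bar>z\<bar> * \<bar>z\<bar>" by (intro mult_left_mono) auto
  also have "\<bar>z\<bar> * \<bar>z\<bar> = z\<^sup>2" by (simp add: power2_eq_square)
  finally show ?thesis by simp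
qed

lemma abs_le_sqrt_of_sq: "(z::real)\<^sup>2 \<le> w \<Longrightarrow> \<bar>z\<bar> \<le> sqrt w"
  by (metis real_le_rsqrt power2_abs)

lemma core:
  fixes \<Psi> :: "'a::euclidean_space \<Rightarrow> real" and \<Omega> :: "'a set" and v :: "'a \<Rightarrow> real" and xs :: "'a list"
  assumes psd: "\<And>zs c. 0 \<le> (\<Sum>j<length zs. \<Sum>k<length zs. c j * c k * \<Psi> (zs!j - zs!k))"
    and pd0: "\<forall>zs c. distinct zs \<longrightarrow> (\<exists>j<length zs. c j \<noteq> 0) \<longrightarrow> 0 < (\<Sum>j<length zs. \<Sum>k<length zs. c j * c k * \<Psi> (zs!j - zs!k))"
    and dist: "distinct xs"
    and sym: "\<And>h. \<Psi> (-h) = \<Psi> h" and z: "\<Psi> 0 = 1"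
    and int: "\<And>z. integrable (lebesgue_on \<Omega>) (\<lambda>y. \<Psi> (z - y) * v y)"
    and vabs: "integrable (lebesgue_on \<Omega>) (\<lambda>y. \<bar>v y\<bar>)"
    and f_def: "f = kernel_op \<Psi> \<Omega> v"
  defines "L \<equiv> (\<integral>y. \<bar>v y\<bar> \<partial>lebesgue_on \<Omega>)"
    and "bYY \<equiv> scalar_prod (obsvec f xs) (kinv \<Psi> xs *\<^sub>v obsvec f xs)"
    and "P \<equiv> \<lambda>x. 1 - scalar_prod (kvec \<Psi> xs x) (kinv \<Psi> xs *\<^sub>v kvec \<Psi> xs x)"
  shows "\<And>x. 0 \<le> P x"
    and "\<And>x. \<bar>f x - kriging \<Psi> xs f x\<bar> \<le> sqrt (P x) * L"
    and "0 \<le> bYY"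
    and "\<And>x. \<bar>kriging \<Psi> xs f x\<bar> \<le> sqrt bYY"
    and "\<And>x k. k < length xs \<Longrightarrow> (\<Psi> (x - xs!k))\<^sup>2 \<le> 1 - P x"
proof -
  define n where "n = length xs"
  define M where "M = lebesgue_on \<Omega>"
  have pd: "\<And>c. (\<exists>j<length xs. c j \<noteq> 0) \<Longrightarrow> 0 < (\<Sum>j<length xs. \<Sum>k<length xs. c j * c k * \<Psi> (xs!j - xs!k))"
    using pd0 dist by blast
  have psd': "\<And>c. 0 \<le> (\<Sum>j<length xs. \<Sum>k<length xs. c j * c k * \<Psi> (xs!j - xs!k))"
    by (rule psd)
  have KA: "kalg n (\<lambda>j k. \<Psi> (xs!j - xs!k)) (\<lambda>j k. kinv \<Psi> xs $$ (j,k))"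
    unfolding n_def by (rule kmat_kalg(1)[OF pd psd' sym])
  interpret K: kalg n "\<lambda>j k. \<Psi> (xs!j - xs!k)" "\<lambda>j k. kinv \<Psi> xs $$ (j,k)"
    by (rule KA)
  have Bc: "kinv \<Psi> xs \<in> carrier_mat n n" unfolding n_def by (rule kmat_kalg(2)[OF pd psd' sym])
  define rx where "rx x = (\<lambda>j. \<Psi> (x - xs!j))" for x
  define Y where "Y = (\<lambda>k. f (xs!k))"
  have kv: "kvec \<Psi> xs x = vec n (rx x)" for x by (simp add: kvec_def rx_def n_def)
  have ov: "obsvec f xs = vec n Y" by (simp add: obsvec_def Y_def n_def)
  have kr: "kriging \<Psi> xs f x = K.bil (rx x) Y" for x
    unfolding kriging_def kv ov sp_bil[OF Bc] K.bil_def ..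
  have bYYe: "bYY = K.bil Y Y" unfolding bYY_def ov sp_bil[OF Bc] K.bil_def ..
  have Pe: "P x = 1 - K.bil (rx x) (rx x)" for x unfolding P_def kv sp_bil[OF Bc] K.bil_def ..
  have ext: "0 \<le> K.q u - 2*\<alpha>*(\<Sum>j<n. u j * rx x j) - 2*\<beta>*(\<Sum>j<n. u j * rx y j) + \<alpha>^2 + 2*\<alpha>*\<beta>*\<Psi> (x - y) + \<beta>^2"
    for x y u \<alpha> \<beta>
  proof -
    have qe: "K.q u = (\<Sum>j<length xs. \<Sum>k<length xs. u j * u k * \<Psi> (xs!j - xs!k))"
      using kalg.q_def[OF KA, of u] by (simp add: n_def)
    show ?thesis unfolding qe unfolding rx_def n_def by (rule ext_psd[OF psd sym z])
  qed
  show P0: "0 \<le> P x" for x unfolding Pe using K.resid_bounds(2)[OF ext[where x=x and y=x]] .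
  show "0 \<le> bYY" unfolding bYYe by (rule K.bil_nonneg)
  show "\<bar>kriging \<Psi> xs f x\<bar> \<le> sqrt bYY" for x
  proof -
    have "(K.bil (rx x) Y)^2 \<le> K.bil (rx x) (rx x) * K.bil Y Y" by (rule K.bil_CS)
    also have "\<dots> \<le> 1 * K.bil Y Y"
      using K.resid_bounds(2)[OF ext[where x=x and y=x]] K.bil_nonneg[of Y] by (intro mult_right_mono) auto
    finally show ?thesis unfolding kr bYYe by (intro abs_le_sqrt_of_sq) simp
  qed
  show "(\<Psi> (x - xs!k))\<^sup>2 \<le> 1 - P x" if "k < length xs" for x k
  proof -
    have "(rx x k)^2 \<le> K.bil (rx x) (rx x)"
      using that z by (intro K.coord_le_bil) (simp_all add: n_def)
    thus ?thesis by (simp add: Pe rx_def)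
  qed
  show "\<bar>f x - kriging \<Psi> xs f x\<bar> \<le> sqrt (P x) * L" for x
  proof -
    define g where "g y = (\<Sum>j<n. \<Sum>k<n. (rx x j * kinv \<Psi> xs $$ (j,k)) * (\<Psi> (xs!k - y) * v y))" for y
    have gint: "integrable M g"
      unfolding g_def M_def
      by (intro Bochner_Integration.integrable_sum Bochner_Integration.integrable_mult_right int)
    have geq: "g y = K.bil (rx x) (rx y) * v y" for y
    proof -
      have "g y = (\<Sum>j<n. \<Sum>k<n. rx x j * kinv \<Psi> xs $$ (j,k) * rx y k) * v y"
        unfolding g_def rx_def
        by (simp add: sum_distrib_right sum_distrib_left mult_ac sym[of "xs!_ - y", simplified])
      thus ?thesis by (simp add: K.bil_def)
    qed
    have Yk: "Y k = (\<integral>y. \<Psi> (xs!k - y) * v y \<partial>M)" for k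
      by (simp add: Y_def f_def kernel_op_def M_def)
    have "kriging \<Psi> xs f x = (\<integral>y. g y \<partial>M)"
    proof -
      have "kriging \<Psi> xs f x = (\<Sum>j<n. \<Sum>k<n. (rx x j * kinv \<Psi> xs $$ (j,k)) * (\<integral>y. \<Psi> (xs!k - y) * v y \<partial>M))"
        unfolding kr K.bil_def Yk ..
      also have "\<dots> = (\<integral>y. g y \<partial>M)"
        unfolding g_def M_def
        by (subst Bochner_Integration.integral_sum, (intro Bochner_Integration.integrable_sum Bochner_Integration.integrable_mult_right int)+,
            subst Bochner_Integration.integral_sum, (intro Bochner_Integration.integrable_mult_right int)+)
           (simp add: integral_mult_right_zero)
      finally show ?thesis .
    qed
    moreover have "f x = (\<integral>y. \<Psi> (x - y) * v y \<partial>M)" by (simp add: f_def kernel_op_def M_def)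
    ultimately have "f x - kriging \<Psi> xs f x = (\<integral>y. \<Psi> (x - y) * v y - g y \<partial>M)"
      using int[of x] gint by (simp add: M_def Bochner_Integration.integral_diff)
    hence "\<bar>f x - kriging \<Psi> xs f x\<bar> \<le> (\<integral>y. \<bar>\<Psi> (x - y) * v y - g y\<bar> \<partial>M)"
      using integral_abs_bound by (metis real_norm_def)
    also have "\<dots> \<le> (\<integral>y. sqrt (P x) * \<bar>v y\<bar> \<partial>M)"
    proof (rule integral_mono)
      show "integrable M (\<lambda>y. \<bar>\<Psi> (x - y) * v y - g y\<bar>)"
        using int[of x] gint by (intro integrable_abs Bochner_Integration.integrable_diff) (simp_all add: M_def)
      show "integrable M (\<lambda>y. sqrt (P x) * \<bar>v y\<bar>)"
        using vabs by (intro Bochner_Integration.integrable_mult_right) (simp add: M_def)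
      fix y
      have "\<Psi> (x - y) * v y - g y = (\<Psi> (x - y) - K.bil (rx x) (rx y)) * v y" by (simp add: geq algebra_simps)
      moreover have "\<bar>\<Psi> (x - y) - K.bil (rx x) (rx y)\<bar> \<le> sqrt (P x)"
      proof -
        have "(\<Psi> (x - y) - K.bil (rx x) (rx y))^2 \<le> (1 - K.bil (rx x) (rx x)) * (1 - K.bil (rx y) (rx y))"
          by (rule K.resid_bounds(1)[OF ext[where x=x and y=y]])
        also have "\<dots> \<le> (1 - K.bil (rx x) (rx x)) * 1"
          using K.resid_bounds(2)[OF ext[where x=x and y=x]] K.bil_nonneg[of "rx y"] by (intro mult_left_mono) auto
        finally show ?thesis unfolding Pe by (intro abs_le_sqrt_of_sq) simp
      qed
      ultimately show "\<bar>\<Psi> (x - y) * v y - g y\<bar> \<le> sqrt (P x) * \<bar>v y\<bar>"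
        by (simp add: abs_mult mult_right_mono)
    qed
    also have "\<dots> = sqrt (P x) * L" by (simp add: L_def M_def)
    finally show ?thesis .
  qed
qed

theorem theorem3p4:
  fixes \<Omega> :: "(real ^ 'd) set" and \<nu> \<beta> :: real and v :: "real ^ 'd \<Rightarrow> real"
  assumes "convex \<Omega>" and "compact \<Omega>" and "0 < emeasure lebesgue \<Omega>"
    and "real CARD('d) / 2 < \<nu>"
    and "0 < \<beta>" and "\<beta> < 1"
    and "v \<in> borel_measurable (lebesgue_on \<Omega>)"
    and "integrable (lebesgue_on \<Omega>) (\<lambda>y. (v y)\<^sup>2)"
    and "\<exists>x\<in>\<Omega>. kernel_op (matern \<nu> CARD('d)) \<Omega> v x \<noteq> 0"
  shows "\<exists>C>0. \<forall>X :: nat \<Rightarrow> (real ^ 'd) list.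
           sampling_scheme \<Omega> X \<and> fill_distance_condition CARD('d) \<Omega> X \<longrightarrow>
           (\<exists>N. \<forall>n\<ge>N. AE x in lebesgue_on \<Omega>.
              \<bar>(kernel_op (matern \<nu> CARD('d)) \<Omega> v x
                 - kriging (matern \<nu> CARD('d)) (X n) (kernel_op (matern \<nu> CARD('d)) \<Omega> v) x)
               / ci_length \<beta> (matern \<nu> CARD('d)) (X n) (kernel_op (matern \<nu> CARD('d)) \<Omega> v) x\<bar> \<le> C)"
proof -
  define \<Psi> :: "real^'d \<Rightarrow> real" where "\<Psi> = matern \<nu> CARD('d)"
  define f where "f = kernel_op \<Psi> \<Omega> v"
  define a where "a = \<nu> - real CARD('d) / 2"
  have A: "0 < \<nu> - real CARD('d) / 2" using assms(4) by simp
  have a0: "0 < a" using A by (simp add: a_def)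
  have \<Psi>G: "\<Psi> h = Gf a ((norm h)\<^sup>2)" for h using matern_Gf[OF A] by (simp add: \<Psi>_def a_def)
  have \<Psi>sym: "\<Psi> (-h) = \<Psi> h" for h by (simp add: \<Psi>_def matern_sym)
  have \<Psi>0: "\<Psi> 0 = 1" by (simp add: \<Psi>_def matern_zero)
  have \<Psi>nn: "0 \<le> \<Psi> h" for h using Gf_nonneg[OF a0] \<Psi>G by simp
  have \<Psi>le: "\<Psi> h \<le> 1" for h using Gf_le1[OF a0] \<Psi>G by simp
  have \<Psi>meas: "\<Psi> \<in> borel_measurable borel"
  proof -
    have "(\<lambda>h::real^'d. (norm h)\<^sup>2) \<in> borel_measurable borel" by measurable
    from measurable_compose[OF this Gf_meas] have "(\<lambda>h::real^'d. Gf a ((norm h)\<^sup>2)) \<in> borel_measurable borel" .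
    moreover have "\<Psi> = (\<lambda>h::real^'d. Gf a ((norm h)\<^sup>2))" using \<Psi>G by (intro ext) simp
    ultimately show ?thesis by simp
  qed
  have \<Psi>cont: "\<exists>\<delta>>0. \<forall>h. norm h < \<delta> \<longrightarrow> 1 - e \<le> \<Psi> h" if e0: "0 < e" for e
  proof -
    obtain \<delta> where \<delta>: "\<delta> > 0" "\<forall>\<rho>. 0 \<le> \<rho> \<and> \<rho> < \<delta> \<longrightarrow> 1 - e \<le> Gf a \<rho>"
      using Gf_cont0[OF a0 e0] by blast
    show ?thesis
    proof (intro exI[of _ "sqrt \<delta>"] conjI allI impI)
      show "0 < sqrt \<delta>" using \<delta> by simp
      fix h :: "real^'d" assume "norm h < sqrt \<delta>"
      hence "(norm h)\<^sup>2 < (sqrt \<delta>)\<^sup>2" by (intro power_strict_mono) auto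
      hence "(norm h)\<^sup>2 < \<delta>" using \<delta> by simp
      thus "1 - e \<le> \<Psi> h" using \<delta> \<Psi>G by simp
    qed
  qed
  have psd: "\<And>zs c. 0 \<le> (\<Sum>j<length zs. \<Sum>k<length zs. c j * c k * \<Psi> (zs!j - zs!k))"
    unfolding \<Psi>_def by (rule matern_psd(1)[OF A])
  have pd: "\<And>zs c. distinct zs \<Longrightarrow> (\<exists>j<length zs. c j \<noteq> 0) \<Longrightarrow> 0 < (\<Sum>j<length zs. \<Sum>k<length zs. c j * c k * \<Psi> (zs!j - zs!k))"
    unfolding \<Psi>_def by (rule matern_psd(2)[OF A])
  have \<Omega>l: "\<Omega> \<in> lmeasurable" using assms(2) by (rule lmeasurable_compact)
  interpret FM: finite_measure "lebesgue_on \<Omega>" by (rule finite_measure_lebesgue_on[OF \<Omega>l])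
  have vm: "v \<in> borel_measurable (lebesgue_on \<Omega>)" by (rule assms(7))
  have vabs: "integrable (lebesgue_on \<Omega>) (\<lambda>y. \<bar>v y\<bar>)"
  proof (rule Bochner_Integration.integrable_bound[where f="\<lambda>y. 1 + (v y)\<^sup>2"])
    show "integrable (lebesgue_on \<Omega>) (\<lambda>y. 1 + (v y)\<^sup>2)"
      using assms(8) by (intro Bochner_Integration.integrable_add FM.integrable_const)
    show "(\<lambda>y. \<bar>v y\<bar>) \<in> borel_measurable (lebesgue_on \<Omega>)" using vm by measurable
    show "AE y in lebesgue_on \<Omega>. norm \<bar>v y\<bar> \<le> norm (1 + (v y)\<^sup>2)"
      by (intro AE_I2) (simp add: abs_le_1_plus_sq add_nonneg_nonneg)
  qed
  have int: "integrable (lebesgue_on \<Omega>) (\<lambda>y. \<Psi> (z - y) * v y)" for z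
  proof -
    have m1: "(\<lambda>y::real^'d. z - y) \<in> borel_measurable borel" by measurable
    have "(\<lambda>y. \<Psi> (z - y)) \<in> borel_measurable borel" using measurable_compose[OF m1 \<Psi>meas] .
    hence "(\<lambda>y. \<Psi> (z - y)) \<in> borel_measurable lborel" by simp
    hence "(\<lambda>y. \<Psi> (z - y)) \<in> borel_measurable lebesgue" by (rule measurable_completion)
    hence m2: "(\<lambda>y. \<Psi> (z - y)) \<in> borel_measurable (lebesgue_on \<Omega>)" by (rule measurable_restrict_space1)
    show ?thesis
    proof (rule Bochner_Integration.integrable_bound[OF vabs])
      show "(\<lambda>y. \<Psi> (z - y) * v y) \<in> borel_measurable (lebesgue_on \<Omega>)"
        using m2 vm by (rule borel_measurable_times)
      show "AE y in lebesgue_on \<Omega>. norm (\<Psi> (z - y) * v y) \<le> norm \<bar>v y\<bar>"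
        by (intro AE_I2) (simp add: abs_mult \<Psi>nn \<Psi>le mult_left_le_one_le)
    qed
  qed
  define L where "L = (\<integral>y. \<bar>v y\<bar> \<partial>lebesgue_on \<Omega>)"
  have L0: "0 \<le> L" unfolding L_def by (rule Bochner_Integration.integral_nonneg) simp
  obtain x0 where x0: "x0 \<in> \<Omega>" "f x0 \<noteq> 0" using assms(9) unfolding f_def \<Psi>_def by blast
  define f0 where "f0 = \<bar>f x0\<bar>"
  have f0: "0 < f0" using x0 by (simp add: f0_def)
  define q0 where "q0 = std_normal_quantile (1 - \<beta> / 2)"
  define C where "C = L / (\<bar>q0\<bar> * f0) + 1"
  have C0: "0 < C" unfolding C_def using L0 f0 by (intro add_nonneg_pos divide_nonneg_nonneg) auto
  obtain Bd where Bd: "\<forall>x\<in>\<Omega>. norm x \<le> Bd" using compact_imp_bounded[OF assms(2)] by (auto simp: bounded_iff)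
  show ?thesis
    unfolding \<Psi>_def[symmetric] f_def[symmetric]
  proof (intro exI[of _ C] conjI allI impI)
    show "0 < C" by (rule C0)
    fix X :: "nat \<Rightarrow> (real^'d) list"
    assume X: "sampling_scheme \<Omega> X \<and> fill_distance_condition CARD('d) \<Omega> X"
    from X obtain c1 c2 where c2: "0 < c2"
      and fdc: "\<forall>n\<ge>1. fill_distance \<Omega> (X n) \<le> c2 * real n powr (- 1 / real CARD('d))"
      unfolding fill_distance_condition_def by blast
    have ss: "distinct (X n)" "length (X n) = n" "set (X n) \<subseteq> \<Omega>" for n
      using X unfolding sampling_scheme_def by auto
    define \<epsilon> where "\<epsilon> = min 1 ((f0 / (2 * (L + 1)))\<^sup>2 / 2)"
    have \<epsilon>0: "0 < \<epsilon>" using f0 L0 by (simp add: \<epsilon>_def)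
    have \<epsilon>1: "\<epsilon> \<le> 1" by (simp add: \<epsilon>_def)
    have \<epsilon>L: "sqrt (2 * \<epsilon>) * L \<le> f0 / 2"
    proof -
      have "2 * \<epsilon> \<le> (f0 / (2 * (L + 1)))\<^sup>2" by (simp add: \<epsilon>_def)
      hence "sqrt (2 * \<epsilon>) \<le> sqrt ((f0 / (2 * (L + 1)))\<^sup>2)" by (rule real_sqrt_le_mono)
      also have "\<dots> = f0 / (2 * (L + 1))" using f0 L0 by simp
      finally have "sqrt (2 * \<epsilon>) * L \<le> f0 / (2 * (L + 1)) * L" using L0 by (rule mult_right_mono)
      also have "\<dots> \<le> f0 / 2"
      proof -
        have "f0 * L \<le> f0 * (L + 1)" using f0 by simp
        thus ?thesis using f0 L0 by (simp add: field_simps)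
      qed
      finally show ?thesis .
    qed
    obtain \<delta> where \<delta>: "0 < \<delta>" "\<forall>h. norm h < \<delta> \<longrightarrow> 1 - \<epsilon> \<le> \<Psi> h" using \<Psi>cont[OF \<epsilon>0] by blast
    have lim: "(\<lambda>n. c2 * real n powr (- 1 / real CARD('d))) \<longlonglongrightarrow> 0"
    proof -
      have "(\<lambda>n. real n powr (- 1 / real CARD('d))) \<longlonglongrightarrow> 0"
        by (rule tendsto_neg_powr) (simp_all add: filterlim_real_sequentially)
      from tendsto_mult[OF tendsto_const this, of c2] show ?thesis by simp
    qed
    have "eventually (\<lambda>n. c2 * real n powr (- 1 / real CARD('d)) < \<delta>) sequentially"
      using lim \<delta>(1) by (rule order_tendstoD(2))
    then obtain N0 where N0: "\<And>n. N0 \<le> n \<Longrightarrow> c2 * real n powr (- 1 / real CARD('d)) < \<delta>"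
      unfolding eventually_sequentially by blast
    define N where "N = max N0 1"
    show "\<exists>N. \<forall>n\<ge>N. AE x in lebesgue_on \<Omega>. \<bar>(f x - kriging \<Psi> (X n) f x) / ci_length \<beta> \<Psi> (X n) f x\<bar> \<le> C"
    proof (intro exI[of _ N] allI impI AE_I2)
      fix n x assume nN: "N \<le> n"
      define xs where "xs = X n"
      have n1: "1 \<le> n" and nN0: "N0 \<le> n" using nN by (auto simp: N_def)
      have dist: "distinct xs" and len: "length xs = n" and sub: "set xs \<subseteq> \<Omega>"
        using ss unfolding xs_def by auto
      define bY where "bY = scalar_prod (obsvec f xs) (kinv \<Psi> xs *\<^sub>v obsvec f xs)"
      define P where "P = (\<lambda>x. 1 - scalar_prod (kvec \<Psi> xs x) (kinv \<Psi> xs *\<^sub>v kvec \<Psi> xs x))"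
      have pdH: "\<forall>zs c. distinct zs \<longrightarrow> (\<exists>j<length zs. c j \<noteq> 0) \<longrightarrow> 0 < (\<Sum>j<length zs. \<Sum>k<length zs. c j * c k * \<Psi> (zs!j - zs!k))"
        using pd by blast
      note co = core[OF psd pdH dist \<Psi>sym \<Psi>0 int vabs f_def]
      have P0: "0 \<le> P z" for z using co(1) unfolding P_def .
      have numb: "\<bar>f z - kriging \<Psi> xs f z\<bar> \<le> sqrt (P z) * L" for z using co(2) unfolding P_def L_def .
      have bY0: "0 \<le> bY" using co(3) unfolding bY_def .
      have krb: "\<bar>kriging \<Psi> xs f z\<bar> \<le> sqrt bY" for z using co(4) unfolding bY_def .
      have coord: "(\<Psi> (z - xs!k))\<^sup>2 \<le> 1 - P z" if "k < length xs" for z k using co(5)[OF that] unfolding P_def .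
      have fill: "fill_distance \<Omega> xs < \<delta>"
        using fdc n1 N0[OF nN0] unfolding xs_def by (meson le_less_trans)
      have ne: "xs \<noteq> []" using len n1 by auto
      have bdd: "bdd_above ((\<lambda>x. infdist x (set xs)) ` \<Omega>)"
      proof (rule bdd_aboveI2)
        fix x assume "x \<in> \<Omega>"
        have "hd xs \<in> set xs" using ne by simp
        hence "infdist x (set xs) \<le> dist x (hd xs)" by (rule infdist_le)
        also have "\<dots> \<le> norm x + norm (hd xs)" by (simp add: dist_norm norm_triangle_ineq4)
        also have "\<dots> \<le> Bd + Bd" using Bd \<open>x \<in> \<Omega>\<close> \<open>hd xs \<in> set xs\<close> sub by (intro add_mono) auto
        finally show "infdist x (set xs) \<le> Bd + Bd" .
      qed
      have "infdist x0 (set xs) \<le> fill_distance \<Omega> xs"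
        unfolding fill_distance_def by (rule cSUP_upper[OF x0(1) bdd])
      moreover obtain y where y: "y \<in> set xs" "infdist x0 (set xs) = dist x0 y"
        using infdist_attains_inf[of "set xs" x0] ne by (auto simp: finite_imp_closed)
      moreover obtain k where k: "k < length xs" "xs ! k = y" using y(1) by (auto simp: in_set_conv_nth)
      ultimately have "norm (x0 - xs!k) < \<delta>" using fill by (simp add: dist_norm)
      hence \<Psi>k: "1 - \<epsilon> \<le> \<Psi> (x0 - xs!k)" using \<delta> by blast
      have "(1 - \<epsilon>)\<^sup>2 \<le> (\<Psi> (x0 - xs!k))\<^sup>2" using \<Psi>k \<epsilon>1 by (intro power_mono) auto
      also have "\<dots> \<le> 1 - P x0" by (rule coord[OF k(1)])
      finally have "P x0 \<le> 1 - (1 - \<epsilon>)\<^sup>2" by simp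
      also have "\<dots> \<le> 2 * \<epsilon>" by (simp add: power2_eq_square algebra_simps)
      finally have "sqrt (P x0) \<le> sqrt (2 * \<epsilon>)" by (rule real_sqrt_le_mono)
      hence "sqrt (P x0) * L \<le> sqrt (2 * \<epsilon>) * L" using L0 by (rule mult_right_mono)
      hence e1: "\<bar>f x0 - kriging \<Psi> xs f x0\<bar> \<le> f0 / 2" using numb[of x0] \<epsilon>L by linarith
      have "f0 \<le> \<bar>kriging \<Psi> xs f x0\<bar> + \<bar>f x0 - kriging \<Psi> xs f x0\<bar>" unfolding f0_def by linarith
      hence sY: "f0 / 2 \<le> sqrt bY" using e1 krb[of x0] by linarith
      have ci: "ci_length \<beta> \<Psi> xs f x = 2 * q0 * (sqrt bY * sqrt (P x))"
        by (simp add: ci_length_def q0_def bY_def P_def real_sqrt_mult)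
      have fin: "\<bar>(f x - kriging \<Psi> xs f x) / ci_length \<beta> \<Psi> xs f x\<bar> \<le> C"
      proof (cases "P x = 0 \<or> q0 = 0")
        case True
        thus ?thesis
        proof
          assume "P x = 0"
          hence "f x - kriging \<Psi> xs f x = 0" using numb[of x] by simp
          thus ?thesis using C0 by simp
        next
          assume "q0 = 0"
          thus ?thesis using C0 ci by simp
        qed
      next
        case False
        hence Pp: "0 < P x" and q0: "q0 \<noteq> 0" using P0[of x] by auto
        have sP: "0 < sqrt (P x)" using Pp by simp
        have den: "\<bar>q0\<bar> * f0 * sqrt (P x) \<le> \<bar>ci_length \<beta> \<Psi> xs f x\<bar>"
        proof -
          have "\<bar>q0\<bar> * f0 * sqrt (P x) = 2 * \<bar>q0\<bar> * (f0 / 2) * sqrt (P x)" by simp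
          also have "\<dots> \<le> 2 * \<bar>q0\<bar> * sqrt bY * sqrt (P x)"
            using sY sP by (intro mult_right_mono mult_left_mono) auto
          also have "\<dots> = \<bar>ci_length \<beta> \<Psi> xs f x\<bar>" unfolding ci using bY0 P0[of x] by (simp add: abs_mult)
          finally show ?thesis .
        qed
        have dp: "0 < \<bar>q0\<bar> * f0 * sqrt (P x)" using q0 f0 sP by simp
        have "\<bar>(f x - kriging \<Psi> xs f x) / ci_length \<beta> \<Psi> xs f x\<bar>
              = \<bar>f x - kriging \<Psi> xs f x\<bar> / \<bar>ci_length \<beta> \<Psi> xs f x\<bar>" by (simp add: abs_divide)
        also have "\<dots> \<le> (sqrt (P x) * L) / \<bar>ci_length \<beta> \<Psi> xs f x\<bar>"
          using numb[of x] by (intro divide_right_mono) auto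
        also have "\<dots> \<le> (sqrt (P x) * L) / (\<bar>q0\<bar> * f0 * sqrt (P x))"
          using den dp L0 sP by (intro divide_left_mono) auto
        also have "\<dots> = L / (\<bar>q0\<bar> * f0)" using sP by (simp add: field_simps)
        also have "\<dots> \<le> C" by (simp add: C_def)
        finally show ?thesis .
      qed
      thus "\<bar>(f x - kriging \<Psi> (X n) f x) / ci_length \<beta> \<Psi> (X n) f x\<bar> \<le> C"
        by (simp add: xs_def)
    qed
  qed
qed


end
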